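(* Suppose that $(s,p)$ satisfies either (i) $s>\frac12-\frac1p$, $p>2$, or (ii) $s\ge0$, $p=2$. Then there exists $\delta_2>0$ such that if a smooth mean-zero function $\phi$ on $\mathbb{T}$ satisfies $\|\phi\|_{\mathcal{F}L_0^{s,p}(\mathbb{T})}\le\delta_2$, then there exists a smooth global solution $u$ of $\partial_tu=i\partial_x^2u+u\partial_xu$ on $\mathbb{R}\times\mathbb{T}$ with $u|_{t=0}=\phi$, and there is a constant $C<\infty$ depending only on $\sup_{x\in\mathbb{T}}|\mathcal{J}(\phi)(x)|$ and $\|\phi\|_{\mathcal{F}L_0^{s,p}}$ such that $\|u(t)\|_{L^2(\mathbb{T})}\le C$ for all $t\in\mathbb{R}$.
   Context: $\mathbb{T}=\mathbb{R}/(2\pi\mathbb{Z})$, $f_k=\frac1{2\pi}\int_{\mathbb{T}}f(x)e^{-ikx}dx$, $\mathbb{Z}_0=\mathbb{Z}\setminus\{0\}$. $\mathcal{F}L_0^{s,p}(\mathbb{T})$ is the space of mean-zero functions with norm $\||k|^sf_k\|_{\ell^p(\mathbb{Z}_0)}$. $\mathcal{J}(\phi)$ is the mean-zero primitive of $\phi$: $\mathcal{J}(\phi)_k=\phi_k/(ik)$ for $k\ne0$, $\mathcal{J}(\phi)_0=0$. *)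

theory Defs
  imports "HOL-Analysis.Analysis"
begin

text \<open>Infinitely (Frechet) differentiable functions on a real normed vector space:
  f is smooth iff it lies in some class of everywhere-differentiable functions that is
  closed under taking directional derivatives (hence all derivatives of all orders exist).\<close>
definition smooth :: "('a::real_normed_vector \<Rightarrow> 'b::real_normed_vector) \<Rightarrow> bool" where
  "smooth f \<longleftrightarrow> (\<exists>S. f \<in> S \<and>
     (\<forall>g\<in>S. \<exists>D. (\<forall>z. (g has_derivative D z) (at z)) \<and> (\<forall>v. (\<lambda>z. D z v) \<in> S)))"

text \<open>Functions on the torus T = R/(2 pi Z), represented as 2 pi-periodic functions on R.\<close>
definition periodic2pi :: "(real \<Rightarrow> 'b) \<Rightarrow> bool" where
  "periodic2pi f \<longleftrightarrow> (\<forall>x. f (x + 2 * pi) = f x)"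

definition fcoeff :: "(real \<Rightarrow> complex) \<Rightarrow> int \<Rightarrow> complex" where
  "fcoeff f k = complex_of_real (1 / (2 * pi)) *
      integral {0..2 * pi} (\<lambda>x. f x * exp (- \<i> * of_int k * of_real x))"

definition mean_zero :: "(real \<Rightarrow> complex) \<Rightarrow> bool" where
  "mean_zero f \<longleftrightarrow> fcoeff f 0 = 0"

definition FL_norm :: "real \<Rightarrow> real \<Rightarrow> (real \<Rightarrow> complex) \<Rightarrow> real" where
  "FL_norm s p f =
     (\<Sum>\<^sub>\<infinity>k\<in>UNIV - {0::int}. (\<bar>real_of_int k\<bar> powr s * cmod (fcoeff f k)) powr p) powr (1 / p)"

text \<open>Mean-zero primitive J(phi), defined on the Fourier side: J(phi)_k = phi_k/(ik), J(phi)_0 = 0.\<close>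
definition Jprim :: "(real \<Rightarrow> complex) \<Rightarrow> real \<Rightarrow> complex" where
  "Jprim f x = (\<Sum>\<^sub>\<infinity>k\<in>UNIV - {0::int}.
      fcoeff f k / (\<i> * of_int k) * exp (\<i> * of_int k * of_real x))"

definition L2_norm :: "(real \<Rightarrow> complex) \<Rightarrow> real" where
  "L2_norm f = sqrt (integral {0..2 * pi} (\<lambda>x. (cmod (f x))\<^sup>2))"

definition smooth_global_solution :: "(real \<Rightarrow> real \<Rightarrow> complex) \<Rightarrow> bool" where
  "smooth_global_solution u \<longleftrightarrow>
     smooth (\<lambda>(t, x). u t x) \<and> (\<forall>t. periodic2pi (u t)) \<and>
     (\<forall>t x. vector_derivative (\<lambda>\<tau>. u \<tau> x) (at t) =
        \<i> * vector_derivative (\<lambda>y. vector_derivative (\<lambda>z. u t z) (at y)) (at x)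
        + u t x * vector_derivative (\<lambda>y. u t y) (at x))"

end

theory Submission
  imports Defs "HOL-Library.Nat_Bijection"
begin


abbreviation dec :: "nat \<Rightarrow> int" where "dec \<equiv> int_decode"

lemma dec_bound: "real n + 1 \<le> 2 * (1 + \<bar>real_of_int (dec n)\<bar>)"
proof -
  have "sum_decode n = (if even n then Inl (n div 2) else Inr (n div 2))"
    by (simp add: sum_decode_def)
  then show ?thesis
    by (cases "even n") (auto simp: int_decode_def elim!: evenE oddE)
qed

lemma summable_invsq_nat: "summable (\<lambda>n. 1 / (1 + \<bar>real_of_int (dec n)\<bar>)^2)"
proof (rule summable_comparison_test'[of "\<lambda>n. 4 * inverse ((real (Suc n))^2)"])
  have "summable (\<lambda>n. inverse ((real (Suc n))^2))"
    using inverse_power_summable[of 2, where 'a=real] by (subst summable_Suc_iff) simp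
  then show "summable (\<lambda>n. 4 * inverse ((real (Suc n))^2))"
    by (intro summable_mult)
  fix n :: nat assume "n \<ge> 0"
  have b: "real n + 1 \<le> 2 * (1 + \<bar>real_of_int (dec n)\<bar>)" by (rule dec_bound)
  have "(real n + 1)^2 \<le> (2 * (1 + \<bar>real_of_int (dec n)\<bar>))^2"
    using b by (intro power_mono) auto
  also have "(2 * (1 + \<bar>real_of_int (dec n)\<bar>))^2 = 4 * (1 + \<bar>real_of_int (dec n)\<bar>)^2"
    by (simp add: power2_eq_square algebra_simps)
  finally have "(real n + 1)^2 \<le> 4 * (1 + \<bar>real_of_int (dec n)\<bar>)^2" .
  then show "norm (1 / (1 + \<bar>real_of_int (dec n)\<bar>)^2) \<le> 4 * inverse ((real (Suc n))^2)"
    by (simp add: field_simps)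
qed

lemma summable_on_int_via_dec:
  fixes g :: "int \<Rightarrow> real"
  assumes "\<And>k. g k \<ge> 0" "summable (\<lambda>n. g (dec n))"
  shows "g summable_on UNIV"
proof -
  have "(g \<circ> dec) summable_on UNIV"
    using assms by (subst summable_on_UNIV_nonneg_real_iff) (auto simp: o_def)
  then have "g summable_on (dec ` UNIV)"
    by (subst summable_on_reindex) (auto intro: inj_int_decode)
  then show ?thesis using surj_int_decode by simp
qed

lemma summable_dec_via_int:
  fixes g :: "int \<Rightarrow> real"
  assumes "\<And>k. g k \<ge> 0" "g summable_on UNIV"
  shows "summable (\<lambda>n. g (dec n))"
proof -
  have "g summable_on (dec ` UNIV)" using assms surj_int_decode by simp
  then have "(g \<circ> dec) summable_on UNIV"
    by (subst (asm) summable_on_reindex) (auto intro: inj_int_decode)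
  then show ?thesis
    using assms by (subst (asm) summable_on_UNIV_nonneg_real_iff) (auto simp: o_def)
qed

lemma infsum_int_as_suminf:
  fixes g :: "int \<Rightarrow> 'a::banach"
  assumes "(\<lambda>k. norm (g k)) summable_on UNIV"
  shows "(\<lambda>n. g (dec n)) sums (\<Sum>\<^sub>\<infinity>k. g k)" "summable (\<lambda>n. norm (g (dec n)))"
proof -
  show s: "summable (\<lambda>n. norm (g (dec n)))"
    by (rule summable_dec_via_int[OF _ assms]) simp
  have gs: "g summable_on UNIV" using assms abs_summable_summable by blast
  then have "(g has_sum (\<Sum>\<^sub>\<infinity>k. g k)) (dec ` UNIV)" using surj_int_decode
    by (simp add: has_sum_infsum)
  then have "((g \<circ> dec) has_sum (\<Sum>\<^sub>\<infinity>k. g k)) UNIV"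
    by (subst (asm) has_sum_reindex) (auto intro: inj_int_decode)
  then show "(\<lambda>n. g (dec n)) sums (\<Sum>\<^sub>\<infinity>k. g k)"
    by (auto dest: has_sum_imp_sums simp: o_def)
qed

definition w2 :: "int \<Rightarrow> real" where "w2 k = 1 / (1 + \<bar>real_of_int k\<bar>)^2"

lemma w2_summable: "w2 summable_on UNIV"
  by (rule summable_on_int_via_dec) (use summable_invsq_nat in \<open>auto simp: w2_def\<close>)

definition rapid :: "(int \<Rightarrow> complex) \<Rightarrow> bool" where
  "rapid a \<longleftrightarrow> (\<forall>m::nat. \<exists>B. \<forall>k. (1 + \<bar>real_of_int k\<bar>)^m * cmod (a k) \<le> B)"

lemma rapid_summable:
  assumes "rapid a"
  shows "(\<lambda>k. (1 + \<bar>real_of_int k\<bar>)^m * cmod (a k)) summable_on UNIV"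
proof -
  obtain B where B: "\<And>k. (1 + \<bar>real_of_int k\<bar>)^(m+2) * cmod (a k) \<le> B"
    using assms unfolding rapid_def by blast
  have "(\<lambda>k. B * w2 k) summable_on UNIV"
    using w2_summable by (rule summable_on_cmult_right)
  then show ?thesis
  proof (rule summable_on_comparison_test)
    fix k :: int
    have pos: "(1 + \<bar>real_of_int k\<bar>)^2 > 0" by simp
    have e: "(1 + \<bar>real_of_int k\<bar>)^(m+2) = (1 + \<bar>real_of_int k\<bar>)^m * (1 + \<bar>real_of_int k\<bar>)^2"
      by (rule power_add)
    have "(1 + \<bar>real_of_int k\<bar>)^m * cmod (a k) * (1 + \<bar>real_of_int k\<bar>)^2 \<le> B"
      using B[of k] unfolding e by (simp add: mult_ac)
    then show "(1 + \<bar>real_of_int k\<bar>)^m * cmod (a k) \<le> B * w2 k"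
      using pos by (simp add: w2_def field_simps)
  qed simp
qed

lemma rapid_summable0:
  assumes "rapid a" shows "(\<lambda>k. cmod (a k)) summable_on UNIV"
  using rapid_summable[OF assms, of 0] by simp

lemma rapid_mono:
  assumes "rapid a" "\<And>k. cmod (b k) \<le> (1 + \<bar>real_of_int k\<bar>)^j * C * cmod (a k)"
  shows "rapid b"
  unfolding rapid_def
proof
  fix m
  obtain B where B: "\<And>k. (1 + \<bar>real_of_int k\<bar>)^(m+j) * cmod (a k) \<le> B"
    using assms(1) unfolding rapid_def by blast
  have "(1 + \<bar>real_of_int k\<bar>)^m * cmod (b k) \<le> \<bar>C\<bar> * B" for k
  proof -
    have "(1 + \<bar>real_of_int k\<bar>)^m * cmod (b k) \<le> (1 + \<bar>real_of_int k\<bar>)^m * ((1 + \<bar>real_of_int k\<bar>)^j * C * cmod (a k))"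
      by (intro mult_left_mono assms(2)) auto
    also have "\<dots> = C * ((1 + \<bar>real_of_int k\<bar>)^(m+j) * cmod (a k))"
      by (simp add: power_add mult_ac)
    also have "\<dots> \<le> \<bar>C\<bar> * ((1 + \<bar>real_of_int k\<bar>)^(m+j) * cmod (a k))"
      by (intro mult_right_mono) auto
    also have "\<dots> \<le> \<bar>C\<bar> * B" by (intro mult_left_mono B) auto
    finally show ?thesis .
  qed
  then show "\<exists>B. \<forall>k. (1 + \<bar>real_of_int k\<bar>)^m * cmod (b k) \<le> B" by blast
qed



section \<open>Closure properties of smooth\<close>

inductive_set alg :: "('a::real_normed_vector \<Rightarrow> complex) set \<Rightarrow> ('a \<Rightarrow> complex) set" for B where
  base: "g \<in> B \<Longrightarrow> g \<in> alg B"
| const: "(\<lambda>z. c) \<in> alg B"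
| add: "f \<in> alg B \<Longrightarrow> g \<in> alg B \<Longrightarrow> (\<lambda>z. f z + g z) \<in> alg B"
| mult: "f \<in> alg B \<Longrightarrow> g \<in> alg B \<Longrightarrow> (\<lambda>z. f z * g z) \<in> alg B"

definition dprop :: "('a::real_normed_vector \<Rightarrow> complex) set \<Rightarrow> ('a \<Rightarrow> complex) \<Rightarrow> bool" where
  "dprop S g \<longleftrightarrow> (\<exists>D. (\<forall>z. (g has_derivative D z) (at z)) \<and> (\<forall>v. (\<lambda>z. D z v) \<in> S))"

lemma alg_dprop:
  assumes "\<And>g. g \<in> B \<Longrightarrow> dprop (alg B) g" and "f \<in> alg B"
  shows "dprop (alg B) f"
  using assms(2)
proof induction
  case (base g) then show ?case by (rule assms(1))
next
  case (const c)
  show ?case unfolding dprop_def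
    by (rule exI[of _ "\<lambda>z v. 0"]) (auto intro: alg.const)
next
  case (add f g)
  from add.IH obtain D1 where D1: "\<And>z. (f has_derivative D1 z) (at z)" "\<And>v. (\<lambda>z. D1 z v) \<in> alg B"
    unfolding dprop_def by blast
  from add.IH obtain D2 where D2: "\<And>z. (g has_derivative D2 z) (at z)" "\<And>v. (\<lambda>z. D2 z v) \<in> alg B"
    unfolding dprop_def by blast
  show ?case unfolding dprop_def
    by (rule exI[of _ "\<lambda>z v. D1 z v + D2 z v"])
       (auto intro!: has_derivative_add D1 D2 alg.add)
next
  case (mult f g)
  from mult.IH obtain D1 where D1: "\<And>z. (f has_derivative D1 z) (at z)" "\<And>v. (\<lambda>z. D1 z v) \<in> alg B"
    unfolding dprop_def by blast
  from mult.IH obtain D2 where D2: "\<And>z. (g has_derivative D2 z) (at z)" "\<And>v. (\<lambda>z. D2 z v) \<in> alg B"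
    unfolding dprop_def by blast
  show ?case unfolding dprop_def
    by (rule exI[of _ "\<lambda>z v. f z * D2 z v + D1 z v * g z"])
       (auto intro!: has_derivative_mult D1 D2 alg.add alg.mult mult.hyps)
qed

lemma smooth_alg:
  assumes "\<And>g. g \<in> B \<Longrightarrow> dprop (alg B) g" and "f \<in> alg B"
  shows "smooth f"
  unfolding smooth_def
  using alg_dprop[OF assms(1)] assms(2) unfolding dprop_def by blast

lemma smoothE:
  assumes "smooth f"
  obtains S where "f \<in> S" "\<And>g. g \<in> S \<Longrightarrow> dprop S g"
proof -
  from assms obtain S where S: "f \<in> S"
    "\<forall>g\<in>S. \<exists>D. (\<forall>z. (g has_derivative D z) (at z)) \<and> (\<forall>v. (\<lambda>z. D z v) \<in> S)"
    unfolding smooth_def by blast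
  show thesis by (rule that[of S]) (use S in \<open>auto simp: dprop_def\<close>)
qed

lemma dprop_mono: "dprop S g \<Longrightarrow> S \<subseteq> T \<Longrightarrow> dprop T g"
  unfolding dprop_def by blast

lemma smooth_mult:
  fixes f g :: "'a::real_normed_vector \<Rightarrow> complex"
  assumes "smooth f" "smooth g"
  shows "smooth (\<lambda>z. f z * g z)"
proof -
  obtain S where S: "f \<in> S" "\<And>h. h \<in> S \<Longrightarrow> dprop S h" using smoothE[OF assms(1)] by blast
  obtain T where T: "g \<in> T" "\<And>h. h \<in> T \<Longrightarrow> dprop T h" using smoothE[OF assms(2)] by blast
  have sub: "S \<subseteq> alg (S \<union> T)" "T \<subseteq> alg (S \<union> T)" by (auto intro: alg.base)
  show ?thesis
  proof (rule smooth_alg[of "S \<union> T"])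
    fix h assume "h \<in> S \<union> T"
    then show "dprop (alg (S \<union> T)) h" using S T sub by (auto intro: dprop_mono)
  next
    show "(\<lambda>z. f z * g z) \<in> alg (S \<union> T)" using S(1) T(1) by (intro alg.mult alg.base) auto
  qed
qed

lemma smooth_add:
  fixes f g :: "'a::real_normed_vector \<Rightarrow> complex"
  assumes "smooth f" "smooth g"
  shows "smooth (\<lambda>z. f z + g z)"
proof -
  obtain S where S: "f \<in> S" "\<And>h. h \<in> S \<Longrightarrow> dprop S h" using smoothE[OF assms(1)] by blast
  obtain T where T: "g \<in> T" "\<And>h. h \<in> T \<Longrightarrow> dprop T h" using smoothE[OF assms(2)] by blast
  have sub: "S \<subseteq> alg (S \<union> T)" "T \<subseteq> alg (S \<union> T)" by (auto intro: alg.base)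
  show ?thesis
  proof (rule smooth_alg[of "S \<union> T"])
    fix h assume "h \<in> S \<union> T"
    then show "dprop (alg (S \<union> T)) h" using S T sub by (auto intro: dprop_mono)
  next
    show "(\<lambda>z. f z + g z) \<in> alg (S \<union> T)" using S(1) T(1) by (intro alg.add alg.base) auto
  qed
qed

lemma smooth_const: "smooth (\<lambda>z::'a::real_normed_vector. c::complex)"
  by (rule smooth_alg[of "{}"]) (auto intro: alg.const)

lemma smooth_cmult:
  fixes f :: "'a::real_normed_vector \<Rightarrow> complex"
  assumes "smooth f" shows "smooth (\<lambda>z. c * f z)"
  using smooth_mult[OF smooth_const assms] .

lemma smooth_exp:
  fixes f :: "'a::real_normed_vector \<Rightarrow> complex"
  assumes "smooth f"
  shows "smooth (\<lambda>z. exp (f z))"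
proof -
  obtain S where S: "f \<in> S" "\<And>h. h \<in> S \<Longrightarrow> dprop S h" using smoothE[OF assms] by blast
  let ?e = "\<lambda>z. exp (f z)"
  let ?B = "S \<union> {?e}"
  have sub: "S \<subseteq> alg ?B" by (auto intro: alg.base)
  show ?thesis
  proof (rule smooth_alg[of ?B])
    fix h assume h: "h \<in> ?B"
    show "dprop (alg ?B) h"
    proof (cases "h \<in> S")
      case True then show ?thesis using S sub by (auto intro: dprop_mono)
    next
      case False
      then have he: "h = ?e" using h by auto
      from S(2)[OF S(1)] obtain D where D: "\<And>z. (f has_derivative D z) (at z)" "\<And>v. (\<lambda>z. D z v) \<in> S"
        unfolding dprop_def by blast
      have "(?e has_derivative (\<lambda>v. exp (f z) * D z v)) (at z)" for z
        using has_derivative_compose[OF D(1)[of z] has_field_derivative_imp_has_derivative[OF DERIV_exp]]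
        by (simp add: mult.commute)
      moreover have "(\<lambda>z. exp (f z) * D z v) \<in> alg ?B" for v
        using D(2)[of v] by (intro alg.mult alg.base) auto
      ultimately show ?thesis unfolding dprop_def he
        by (intro exI[where x="\<lambda>z v. exp (f z) * D z v"]) simp
    qed
  next
    show "?e \<in> alg ?B" by (auto intro: alg.base)
  qed
qed

lemma smooth_inverse:
  fixes f :: "'a::real_normed_vector \<Rightarrow> complex"
  assumes "smooth f" "\<And>z. f z \<noteq> 0"
  shows "smooth (\<lambda>z. inverse (f z))"
proof -
  obtain S where S: "f \<in> S" "\<And>h. h \<in> S \<Longrightarrow> dprop S h" using smoothE[OF assms(1)] by blast
  let ?e = "\<lambda>z. inverse (f z)"
  let ?B = "S \<union> {?e}"
  have sub: "S \<subseteq> alg ?B" by (auto intro: alg.base)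
  show ?thesis
  proof (rule smooth_alg[of ?B])
    fix h assume h: "h \<in> ?B"
    show "dprop (alg ?B) h"
    proof (cases "h \<in> S")
      case True then show ?thesis using S sub by (auto intro: dprop_mono)
    next
      case False
      then have he: "h = ?e" using h by auto
      from S(2)[OF S(1)] obtain D where D: "\<And>z. (f has_derivative D z) (at z)" "\<And>v. (\<lambda>z. D z v) \<in> S"
        unfolding dprop_def by blast
      have "(?e has_derivative (\<lambda>v. (-1) * (inverse (f z) * D z v * inverse (f z)))) (at z)" for z
        using Deriv.has_derivative_inverse[OF assms(2) D(1)] by simp
      moreover have "(\<lambda>z. (-1) * (inverse (f z) * D z v * inverse (f z))) \<in> alg ?B" for v
        apply (rule alg.mult[OF alg.const])
        apply (rule alg.mult[OF alg.mult])
        using D(2)[of v] by (auto intro: alg.base)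
      ultimately show ?thesis unfolding dprop_def he
        by (intro exI[where x="\<lambda>z v. (-1) * (inverse (f z) * D z v * inverse (f z))"]) simp
    qed
  next
    show "?e \<in> alg ?B" by (auto intro: alg.base)
  qed
qed

lemma smooth_compose_linear:
  fixes f :: "'a::real_normed_vector \<Rightarrow> complex" and L :: "'b::real_normed_vector \<Rightarrow> 'a"
  assumes "smooth f" "bounded_linear L"
  shows "smooth (\<lambda>z. f (L z))"
proof -
  obtain S where S: "f \<in> S" "\<And>h. h \<in> S \<Longrightarrow> dprop S h" using smoothE[OF assms(1)] by blast
  let ?T = "(\<lambda>g z. g (L z)) ` S"
  have "dprop ?T h" if "h \<in> ?T" for h
  proof -
    from that obtain g where g: "g \<in> S" "h = (\<lambda>z. g (L z))" by blast
    from S(2)[OF g(1)] obtain D where D: "\<And>z. (g has_derivative D z) (at z)" "\<And>v. (\<lambda>z. D z v) \<in> S"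
      unfolding dprop_def by blast
    have "(h has_derivative (\<lambda>v. D (L z) (L v))) (at z)" for z
      unfolding g(2) using has_derivative_compose[OF bounded_linear_imp_has_derivative[OF assms(2)] D(1)]
      by (simp add: o_def)
    moreover have "(\<lambda>z. D (L z) (L v)) \<in> ?T" for v
      using D(2)[of "L v"] by (intro image_eqI[where x="\<lambda>z. D z (L v)"]) auto
    ultimately show ?thesis unfolding dprop_def
      by (intro exI[where x="\<lambda>z v. D (L z) (L v)"]) simp
  qed
  moreover have "(\<lambda>z. f (L z)) \<in> ?T" using S(1) by blast
  ultimately have "(\<lambda>z. f (L z)) \<in> ?T \<and> (\<forall>g\<in>?T. dprop ?T g)" by blast
  then show ?thesis unfolding smooth_def dprop_def by (rule exI)
qed

lemma smooth_1d_deriv: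
  fixes f :: "real \<Rightarrow> complex"
  assumes "smooth f"
  obtains f' where "\<And>x. (f has_vector_derivative f' x) (at x)" "smooth f'"
proof -
  obtain S where S: "f \<in> S" "\<And>h. h \<in> S \<Longrightarrow> dprop S h" using smoothE[OF assms] by blast
  from S(2)[OF S(1)] obtain D where D: "\<And>z. (f has_derivative D z) (at z)" "\<And>v. (\<lambda>z. D z v) \<in> S"
    unfolding dprop_def by blast
  have lin: "D x h = h *\<^sub>R D x 1" for x h
  proof -
    have "linear (D x)" using D(1)[of x] has_derivative_linear by blast
    then have "D x (h *\<^sub>R 1) = h *\<^sub>R D x 1" by (rule linear_scale)
    then show ?thesis by simp
  qed
  have "(f has_vector_derivative D x 1) (at x)" for x
    unfolding has_vector_derivative_def using D(1)[of x] lin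
    by (metis (no_types, lifting) ext)
  moreover have "smooth (\<lambda>z. D z 1)"
    unfolding smooth_def using D(2)[of 1] S(2) unfolding dprop_def by blast
  ultimately show ?thesis by (rule that)
qed

lemma smooth_differentiable:
  assumes "smooth f" shows "f differentiable at z"
  using assms unfolding smooth_def differentiable_def by blast

lemma smooth_continuous:
  assumes "smooth f" shows "continuous_on A f"
  by (intro continuous_at_imp_continuous_on ballI differentiable_imp_continuous_within
      smooth_differentiable assms)



definition ee :: "int \<Rightarrow> real \<times> real \<Rightarrow> complex" where
  "ee k z = exp (\<i> * complex_of_real (real_of_int k * snd z - (real_of_int k)^2 * fst z))"

definition W :: "(int \<Rightarrow> complex) \<Rightarrow> real \<times> real \<Rightarrow> complex" where
  "W a z = (\<Sum>\<^sub>\<infinity>k. a k * ee k z)"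

definition dt :: "(int \<Rightarrow> complex) \<Rightarrow> int \<Rightarrow> complex" where
  "dt a k = a k * (- \<i> * (of_int k)^2)"

definition dx :: "(int \<Rightarrow> complex) \<Rightarrow> int \<Rightarrow> complex" where
  "dx a k = a k * (\<i> * of_int k)"

lemma norm_ee [simp]: "norm (ee k z) = 1"
  unfolding ee_def by (rule norm_exp_i_times)

lemma ee_nonzero [simp]: "ee k z \<noteq> 0"
  unfolding ee_def by simp

lemma rapid_add: "rapid a \<Longrightarrow> rapid b \<Longrightarrow> rapid (\<lambda>k. a k + b k)"
  unfolding rapid_def
proof safe
  fix m assume a: "\<forall>m. \<exists>B. \<forall>k. (1 + \<bar>real_of_int k\<bar>) ^ m * cmod (a k) \<le> B"
    and b: "\<forall>m. \<exists>B. \<forall>k. (1 + \<bar>real_of_int k\<bar>) ^ m * cmod (b k) \<le> B"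
  obtain A where A: "\<And>k. (1 + \<bar>real_of_int k\<bar>) ^ m * cmod (a k) \<le> A" using a by blast
  obtain B where B: "\<And>k. (1 + \<bar>real_of_int k\<bar>) ^ m * cmod (b k) \<le> B" using b by blast
  have "(1 + \<bar>real_of_int k\<bar>) ^ m * cmod (a k + b k) \<le> A + B" for k
  proof -
    have "(1 + \<bar>real_of_int k\<bar>) ^ m * cmod (a k + b k) \<le> (1 + \<bar>real_of_int k\<bar>) ^ m * (cmod (a k) + cmod (b k))"
      by (intro mult_left_mono norm_triangle_ineq) auto
    also have "\<dots> \<le> A + B" using A[of k] B[of k] by (simp add: distrib_left)
    finally show ?thesis .
  qed
  then show "\<exists>B. \<forall>k. (1 + \<bar>real_of_int k\<bar>) ^ m * cmod (a k + b k) \<le> B" by blast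
qed

lemma rapid_cmult: "rapid a \<Longrightarrow> rapid (\<lambda>k. c * a k)"
  by (rule rapid_mono[where j=0 and C="cmod c"]) (auto simp: norm_mult)

lemma rapid_dx: "rapid a \<Longrightarrow> rapid (dx a)"
proof (rule rapid_mono[where j=1 and C=1])
  fix k
  have "cmod (dx a k) = cmod (a k) * \<bar>real_of_int k\<bar>" by (simp add: dx_def norm_mult)
  also have "\<dots> \<le> cmod (a k) * (1 + \<bar>real_of_int k\<bar>)" by (intro mult_left_mono) auto
  finally show "cmod (dx a k) \<le> (1 + \<bar>real_of_int k\<bar>) ^ 1 * 1 * cmod (a k)" by (simp add: mult_ac)
qed

lemma rapid_dt: "rapid a \<Longrightarrow> rapid (dt a)"
proof (rule rapid_mono[where j=2 and C=1])
  fix k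
  have "cmod (dt a k) = cmod (a k) * (real_of_int k)^2" by (simp add: dt_def norm_mult norm_power)
  also have "\<dots> \<le> cmod (a k) * (1 + \<bar>real_of_int k\<bar>)^2"
  proof (intro mult_left_mono)
    have "(real_of_int k)^2 = \<bar>real_of_int k\<bar>^2" by simp
    also have "\<dots> \<le> (1 + \<bar>real_of_int k\<bar>)^2" by (intro power_mono) auto
    finally show "(real_of_int k)^2 \<le> (1 + \<bar>real_of_int k\<bar>)^2" .
  qed auto
  finally show "cmod (dt a k) \<le> (1 + \<bar>real_of_int k\<bar>) ^ 2 * 1 * cmod (a k)" by (simp add: mult_ac)
qed

lemma W_abs_summable: "rapid a \<Longrightarrow> (\<lambda>k. norm (a k * ee k z)) summable_on UNIV"
  using rapid_summable0 by (simp add: norm_mult)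

lemma W_summable: "rapid a \<Longrightarrow> (\<lambda>k. a k * ee k z) summable_on UNIV"
  using W_abs_summable abs_summable_summable by metis

lemma W_add: "rapid a \<Longrightarrow> rapid b \<Longrightarrow> W (\<lambda>k. a k + b k) z = W a z + W b z"
  unfolding W_def distrib_right by (intro infsum_add W_summable)

lemma W_cmult: "W (\<lambda>k. c * a k) z = c * W a z"
  unfolding W_def by (simp add: infsum_cmult_right' mult.assoc)

lemma W_sums: "rapid a \<Longrightarrow> (\<lambda>n. a (dec n) * ee (dec n) z) sums W a z"
  unfolding W_def by (rule infsum_int_as_suminf(1)[OF W_abs_summable])

lemma ee_deriv:
  "(ee k has_derivative (\<lambda>v. ee k z * (\<i> * complex_of_real (real_of_int k * snd v - (real_of_int k)^2 * fst v)))) (at z)"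
proof -
  have L: "((\<lambda>z. \<i> * complex_of_real (real_of_int k * snd z - (real_of_int k)^2 * fst z)) has_derivative
     (\<lambda>v. \<i> * complex_of_real (real_of_int k * snd v - (real_of_int k)^2 * fst v))) (at z)"
    by (auto intro!: derivative_eq_intros)
  show ?thesis
    using has_derivative_compose[OF L has_field_derivative_imp_has_derivative[OF DERIV_exp]]
    unfolding ee_def by (simp add: mult.commute)
qed

lemma W_deriv:
  assumes a: "rapid a"
  shows "(W a has_derivative (\<lambda>v. of_real (fst v) * W (dt a) z + of_real (snd v) * W (dx a) z)) (at z)"
proof -
  define f where "f n z = a (dec n) * ee (dec n) z" for n z
  define f' where "f' n z v = a (dec n) * ee (dec n) z *
      (\<i> * complex_of_real (real_of_int (dec n) * snd v - (real_of_int (dec n))^2 * fst v))" for n z v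
  define g' where "g' z v = of_real (fst v) * W (dt a) z + of_real (snd v) * W (dx a) z" for z v
  define c where "c n = cmod (a (dec n)) * (1 + \<bar>real_of_int (dec n)\<bar>)^2" for n
  have csum: "summable c"
    unfolding c_def using summable_dec_via_int[OF _ rapid_summable[OF a, of 2]]
    by (simp add: mult_ac)
  have fd: "(f n has_derivative f' n z) (at z within UNIV)" for n z
    unfolding f_def f'_def using has_derivative_mult_right[OF ee_deriv] by (simp add: mult.assoc)
  have f'_split: "f' n z v = of_real (fst v) * (dt a (dec n) * ee (dec n) z)
     + of_real (snd v) * (dx a (dec n) * ee (dec n) z)" for n z v
    unfolding f'_def dt_def dx_def by (simp add: algebra_simps)
  have f'sums: "(\<lambda>n. f' n z v) sums g' z v" for z v
    unfolding f'_split g'_def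
    by (intro sums_add sums_mult W_sums rapid_dt rapid_dx a)
  have f'bound: "norm (f' n z v) \<le> c n * norm v" for n z v
  proof -
    let ?k = "real_of_int (dec n)"
    have n1: "\<bar>fst v\<bar> \<le> norm v" "\<bar>snd v\<bar> \<le> norm v"
      using norm_fst_le[of "fst v" "snd v"] norm_snd_le[of "snd v" "fst v"] by auto
    have "\<bar>?k * snd v - ?k^2 * fst v\<bar> \<le> \<bar>?k\<bar> * \<bar>snd v\<bar> + ?k^2 * \<bar>fst v\<bar>"
      by (simp add: abs_mult abs_triangle_ineq4 order_trans[OF abs_triangle_ineq4])
    also have "\<dots> \<le> \<bar>?k\<bar> * norm v + ?k^2 * norm v"
      using n1 by (intro add_mono mult_left_mono) auto
    also have "\<dots> = (\<bar>?k\<bar> + ?k^2) * norm v" by (simp add: algebra_simps)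
    also have "\<dots> \<le> (1 + \<bar>?k\<bar>)^2 * norm v"
      by (rule mult_right_mono) (auto simp: power2_eq_square algebra_simps)
    finally have *: "\<bar>?k * snd v - ?k^2 * fst v\<bar> \<le> (1 + \<bar>?k\<bar>)^2 * norm v" .
    have "norm (f' n z v) = cmod (a (dec n)) * \<bar>?k * snd v - ?k^2 * fst v\<bar>"
      unfolding f'_def by (simp only: norm_mult norm_ee norm_ii norm_of_real mult_1_right mult_1_left)
    also have "\<dots> \<le> cmod (a (dec n)) * ((1 + \<bar>?k\<bar>)^2 * norm v)"
      by (intro mult_left_mono *) auto
    finally show ?thesis by (simp add: c_def mult_ac)
  qed
  have unif: "\<forall>\<^sub>F n in sequentially. \<forall>x\<in>UNIV. \<forall>h. norm (sum (\<lambda>i. f' i x h) {..<n} - g' x h) \<le> e * norm h"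
    if e: "e > 0" for e
  proof -
    obtain N where N: "\<And>n. n \<ge> N \<Longrightarrow> norm (\<Sum>i. c (i + n)) < e"
      using suminf_exist_split[OF e csum] by blast
    have "norm (sum (\<lambda>i. f' i x h) {..<n} - g' x h) \<le> e * norm h" if n: "n \<ge> N" for n x h
    proof -
      have s: "summable (\<lambda>i. f' i x h)" using f'sums sums_summable by blast
      have cs: "summable (\<lambda>i. c (i + n))" using csum by (rule summable_ignore_initial_segment)
      have ns: "summable (\<lambda>i. norm (f' (i + n) x h))"
        by (rule summable_comparison_test'[where g="\<lambda>i. c (i+n) * norm h"])
           (use cs f'bound in \<open>auto intro: summable_mult2\<close>)
      have "g' x h = (\<Sum>i. f' i x h)" using f'sums sums_unique by metis
      then have "norm (sum (\<lambda>i. f' i x h) {..<n} - g' x h) = norm (\<Sum>i. f' (i + n) x h)"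
        using suminf_minus_initial_segment[OF s, of n] by (simp add: norm_minus_commute)
      also have "\<dots> \<le> (\<Sum>i. norm (f' (i + n) x h))" by (rule summable_norm[OF ns])
      also have "\<dots> \<le> (\<Sum>i. c (i + n) * norm h)"
        by (intro suminf_le ns summable_mult2 cs f'bound)
      also have "\<dots> = (\<Sum>i. c (i + n)) * norm h" by (intro suminf_mult2[symmetric] cs)
      also have "\<dots> \<le> e * norm h"
      proof -
        have "(\<Sum>i. c (i + n)) \<le> e" using N[OF n] by (simp add: order.strict_implies_order)
        then show ?thesis by (intro mult_right_mono) auto
      qed
      finally show ?thesis .
    qed
    then show ?thesis unfolding eventually_sequentially by blast
  qed
  obtain g where g: "\<And>x. (\<lambda>n. f n x) sums g x \<and> (g has_derivative g' x) (at x within UNIV)"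
    using has_derivative_series[of UNIV f f' g' z "W a z", OF convex_UNIV fd unif]
      W_sums[OF a] unfolding f_def by blast
  have "g = W a"
  proof
    fix x show "g x = W a x" using g[of x] W_sums[OF a, of x] sums_unique2 unfolding f_def by blast
  qed
  then show ?thesis using g[of z] unfolding g'_def by simp
qed

lemma W_dt:
  assumes "rapid a"
  shows "((\<lambda>\<tau>. W a (\<tau>, x)) has_vector_derivative W (dt a) (t, x)) (at t)"
proof -
  have L: "((\<lambda>\<tau>::real. (\<tau>, x)) has_derivative (\<lambda>h. (h, 0))) (at t)"
    by (auto intro!: derivative_eq_intros)
  show ?thesis unfolding has_vector_derivative_def
    using has_derivative_compose[OF L W_deriv[OF assms, of "(t,x)"]]
    by (simp add: scaleR_conv_of_real)
qed

lemma W_dx: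
  assumes "rapid a"
  shows "((\<lambda>y. W a (t, y)) has_vector_derivative W (dx a) (t, x)) (at x)"
proof -
  have L: "((\<lambda>y::real. (t, y)) has_derivative (\<lambda>h. (0, h))) (at x)"
    by (auto intro!: derivative_eq_intros)
  show ?thesis unfolding has_vector_derivative_def
    using has_derivative_compose[OF L W_deriv[OF assms, of "(t,x)"]]
    by (simp add: scaleR_conv_of_real)
qed

lemma smooth_W:
  assumes "rapid a" shows "smooth (W a)"
proof -
  let ?S = "{W b | b. rapid b}"
  have "dprop ?S h" if "h \<in> ?S" for h
  proof -
    from that obtain b where b: "rapid b" "h = W b" by blast
    have "(\<lambda>z. of_real (fst v) * W (dt b) z + of_real (snd v) * W (dx b) z) \<in> ?S" for v
    proof -
      have "(\<lambda>z. of_real (fst v) * W (dt b) z + of_real (snd v) * W (dx b) z)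
          = W (\<lambda>k. of_real (fst v) * dt b k + of_real (snd v) * dx b k)"
        using b(1) by (intro ext) (simp add: W_add W_cmult rapid_cmult rapid_dt rapid_dx)
      moreover have "rapid (\<lambda>k. of_real (fst v) * dt b k + of_real (snd v) * dx b k)"
        using b(1) by (intro rapid_add rapid_cmult rapid_dt rapid_dx)
      ultimately show ?thesis by blast
    qed
    then show ?thesis unfolding dprop_def b(2)
      by (intro exI[where x="\<lambda>z v. of_real (fst v) * W (dt b) z + of_real (snd v) * W (dx b) z"])
         (use W_deriv[OF b(1)] in auto)
  qed
  moreover have "W a \<in> ?S" using assms by blast
  ultimately have "W a \<in> ?S \<and> (\<forall>g\<in>?S. dprop ?S g)" by blast
  then show ?thesis unfolding smooth_def dprop_def by (rule exI)
qed

lemma ee_periodic: "ee k (t, x + 2 * pi) = ee k (t, x)"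
proof -
  have "\<i> * complex_of_real (real_of_int k * (x + 2 * pi) - (real_of_int k)^2 * t)
      = \<i> * complex_of_real (real_of_int k * x - (real_of_int k)^2 * t) + \<i> * (of_int k * (of_real pi * 2))"
    by (simp add: algebra_simps)
  then show ?thesis unfolding ee_def by simp
qed

lemma W_periodic: "W a (t, x + 2 * pi) = W a (t, x)"
  unfolding W_def by (simp add: ee_periodic)

lemma ee_shift: "ee k (t, x) = exp (- \<i> * of_real ((real_of_int k)^2 * t)) * ee k (0, x)"
  unfolding ee_def by (simp add: exp_add[symmetric] algebra_simps)

lemma W_shift: "W a (t, x) = W (\<lambda>k. a k * exp (- \<i> * of_real ((real_of_int k)^2 * t))) (0, x)"
  unfolding W_def by (subst ee_shift) (simp add: mult_ac)

lemma rapid_shift: "rapid a \<Longrightarrow> rapid (\<lambda>k. a k * exp (- \<i> * of_real ((real_of_int k)^2 * t)))"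
  by (rule rapid_mono[where j=0 and C=1]) (auto simp: norm_mult)



definition em :: "int \<Rightarrow> real \<Rightarrow> complex" where
  "em k x = exp ((- \<i> * of_int k) * of_real x)"

lemma fcoeff_em: "fcoeff f k = of_real (1/(2*pi)) * integral {0..2*pi} (\<lambda>x. f x * em k x)"
  by (simp add: fcoeff_def em_def)

lemma vd_exp: "((\<lambda>x. exp (c * of_real x)) has_vector_derivative (c * exp (c * of_real x))) (at x within S)"
  for c :: complex
proof -
  have "((\<lambda>z. exp (c * z)) has_field_derivative (c * exp (c * of_real x))) (at (of_real x))"
    by (auto intro!: derivative_eq_intros)
  then show ?thesis by (rule has_vector_derivative_real_field)
qed

lemma exp_2pi_int: "exp (c * of_real (2 * pi)) = 1" if "c = \<i> * of_int m" for m :: int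
proof -
  have "c * of_real (2 * pi) = \<i> * (of_int m * (of_real pi * 2))" using that by (simp add: algebra_simps)
  then show ?thesis by (simp only: exp_2pi_1_int)
qed

lemma ee0: "ee j (0, x) = exp ((\<i> * of_int j) * of_real x)"
  unfolding ee_def by (simp add: algebra_simps)

lemma em_ee: "em k x = ee (-k) (0, x)"
  unfolding ee0 em_def by simp

lemma ee_em: "ee j (0, x) * em k x = exp ((\<i> * of_int (j - k)) * of_real x)"
  unfolding ee0 em_def by (simp add: exp_add[symmetric] algebra_simps)

lemma int_exp_int:
  "((\<lambda>x. exp ((\<i> * of_int m) * of_real x)) has_integral (if m = 0 then of_real (2*pi) else 0)) {0..2*pi}"
proof (cases "m = 0")
  case True
  then show ?thesis using has_integral_const_real[of "1::complex" 0 "2*pi"]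
    by (simp add: scaleR_conv_of_real)
next
  case False
  let ?c = "\<i> * of_int m :: complex"
  have c: "?c \<noteq> 0" using False by simp
  have "((\<lambda>x. exp (?c * of_real x)) has_integral (exp (?c * of_real (2*pi)) / ?c - exp (?c * of_real 0) / ?c)) {0..2*pi}"
  proof (rule fundamental_theorem_of_calculus)
    fix x :: real
    have "((\<lambda>z. exp (?c * z) / ?c) has_field_derivative exp (?c * of_real x)) (at (of_real x))"
      using c by (auto intro!: derivative_eq_intros)
    then show "((\<lambda>x. exp (?c * of_real x) / ?c) has_vector_derivative exp (?c * of_real x)) (at x within {0..2*pi})"
      by (rule has_vector_derivative_real_field)
  qed simp
  moreover have "exp (?c * of_real (2*pi)) = 1" by (rule exp_2pi_int) simp
  ultimately show ?thesis using False by simp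
qed

lemma ee_cont: "continuous_on A (\<lambda>x. ee k (0, x))"
  unfolding ee0 by (intro continuous_intros)

lemma em_cont: "continuous_on A (em k)"
  unfolding em_def by (intro continuous_intros)

lemma W0_cont: "rapid a \<Longrightarrow> continuous_on A (\<lambda>x. W a (0, x))"
  by (rule continuous_on_compose2[of UNIV "W a"]) (auto intro!: continuous_intros intro: smooth_continuous smooth_W)

lemma has_sum_single_int:
  "((\<lambda>j::int. if j = k then c else 0) has_sum c) UNIV"
proof -
  have "((\<lambda>j::int. if j = k then c else 0) has_sum c) {k}"
    using has_sum_finite[of "{k}" "\<lambda>j. if j = k then c else 0"] by simp
  then show ?thesis by (subst (asm) has_sum_cong_neutral) auto
qed

lemma W_integral_has_sum:
  assumes a: "rapid a" and h: "continuous_on {0..2*pi} h"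
  shows "((\<lambda>k. integral {0..2*pi} (\<lambda>x. h x * (a k * ee k (0,x)))) has_sum
          integral {0..2*pi} (\<lambda>x. h x * W a (0,x))) UNIV"
proof -
  obtain H where H: "\<And>x. x \<in> {0..2*pi} \<Longrightarrow> norm (h x) \<le> H"
    using compact_imp_bounded[OF compact_continuous_image[OF h compact_Icc]]
    unfolding bounded_iff by blast
  define F where "F k x = h x * (a k * ee k (0,x))" for k x
  have hs: "((\<lambda>k. F k x) has_sum h x * W a (0,x)) UNIV" for x
    unfolding F_def W_def
    by (intro has_sum_cmult_right has_sum_infsum W_summable a)
  have ul: "uniform_limit {0..2*pi} (\<lambda>X x. \<Sum>k\<in>X. F k x) (\<lambda>x. h x * W a (0,x)) (finite_subsets_at_top UNIV)"
  proof (rule Weierstrass_m_test_general'[where M="\<lambda>k. H * cmod (a k)"])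
    show "norm (F k x) \<le> H * cmod (a k)" if "k \<in> UNIV" "x \<in> {0..2*pi}" for k x
      unfolding F_def using H[OF that(2)] by (simp add: norm_mult mult_right_mono)
    show "(\<lambda>k. H * cmod (a k)) summable_on UNIV"
      by (intro summable_on_cmult_right rapid_summable0 a)
  qed (use hs in auto)
  have cont: "continuous_on {0..2*pi} (\<lambda>x. \<Sum>k\<in>X. F k x)" for X
    unfolding F_def by (intro continuous_intros h ee_cont)
  obtain I J where I: "\<And>X. ((\<lambda>x. \<Sum>k\<in>X. F k x) has_integral I X) {0..2*pi}"
    and J: "((\<lambda>x. h x * W a (0,x)) has_integral J) {0..2*pi}"
    and lim: "(I \<longlongrightarrow> J) (finite_subsets_at_top UNIV)"
    using uniform_limit_integral[OF ul cont] by auto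
  have Fint: "F k integrable_on {0..2*pi}" for k
    unfolding F_def by (intro integrable_continuous_interval continuous_intros h ee_cont)
  have "I X = (\<Sum>k\<in>X. integral {0..2*pi} (F k))" for X
  proof (cases "finite X")
    case True
    then show ?thesis using I[of X] integral_sum[OF True, of F "{0..2*pi}"] Fint
      by (simp add: integral_unique)
  next
    case False
    then show ?thesis using I[of X] by (simp add: has_integral_0_eq)
  qed
  then have "I = (\<lambda>X. \<Sum>k\<in>X. integral {0..2*pi} (F k))" by auto
  then have "((\<lambda>k. integral {0..2*pi} (F k)) has_sum J) UNIV"
    using lim unfolding has_sum_def by simp
  then show ?thesis using J unfolding F_def by (simp add: integral_unique)
qed

lemma integral_ee_em:
  "integral {0..2*pi} (\<lambda>x. em k x * (c * ee j (0,x))) = (if j = k then c * of_real (2*pi) else 0)"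
proof -
  have "(\<lambda>x. em k x * (c * ee j (0,x))) = (\<lambda>x. c * exp ((\<i> * of_int (j - k)) * of_real x))"
    using ee_em by (auto simp: mult_ac)
  then show ?thesis using int_exp_int[of "j - k"]
    by (auto simp: integral_mult_right integral_unique)
qed

lemma integral_W_em:
  assumes a: "rapid a"
  shows "integral {0..2*pi} (\<lambda>x. em k x * W a (0,x)) = a k * of_real (2*pi)"
proof -
  have "((\<lambda>j. integral {0..2*pi} (\<lambda>x. em k x * (a j * ee j (0,x)))) has_sum
          integral {0..2*pi} (\<lambda>x. em k x * W a (0,x))) UNIV"
    by (rule W_integral_has_sum[OF a em_cont])
  moreover have "((\<lambda>j. integral {0..2*pi} (\<lambda>x. em k x * (a j * ee j (0,x)))) has_sum a k * of_real (2*pi)) UNIV"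
    unfolding integral_ee_em using has_sum_single_int[of k "a k * of_real (2*pi)"]
    by (simp cong: if_cong)
  ultimately show ?thesis using has_sum_unique by blast
qed

lemma fcoeff_W:
  assumes a: "rapid a"
  shows "fcoeff (\<lambda>x. W a (0,x)) k = a k"
  unfolding fcoeff_em using integral_W_em[OF a, of k]
  by (simp add: mult.commute)

lemma W_parseval:
  assumes a: "rapid a"
  shows "((\<lambda>k. (cmod (a k))^2) has_sum integral {0..2*pi} (\<lambda>x. (cmod (W a (0,x)))^2) / (2*pi)) UNIV"
proof -
  have hc: "continuous_on {0..2*pi} (\<lambda>x. cnj (W a (0,x)))"
    by (intro continuous_intros W0_cont a)
  have "integral {0..2*pi} (\<lambda>x. cnj (W a (0,x)) * (a k * ee k (0,x))) = of_real (2*pi) * of_real ((cmod (a k))^2)" for k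
  proof -
    have ce: "cnj (em k x) = ee k (0,x)" for x by (simp add: em_def ee0 exp_cnj)
    have "(\<lambda>x. cnj (W a (0,x)) * (a k * ee k (0,x))) = (\<lambda>x. a k * cnj (em k x * W a (0,x)))"
      by (simp add: ce mult_ac)
    then have "integral {0..2*pi} (\<lambda>x. cnj (W a (0,x)) * (a k * ee k (0,x)))
        = a k * integral {0..2*pi} (\<lambda>x. cnj (em k x * W a (0,x)))"
      by (simp only: integral_mult_right)
    also have "\<dots> = a k * cnj (integral {0..2*pi} (\<lambda>x. em k x * W a (0,x)))"
      by (simp add: integral_cnj)
    also have "\<dots> = of_real (2*pi) * (a k * cnj (a k))"
      by (simp add: integral_W_em[OF a])
    also have "\<dots> = of_real (2*pi) * of_real ((cmod (a k))^2)"
      by (simp only: complex_norm_square)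
    finally show ?thesis .
  qed
  then have "((\<lambda>k. of_real (2*pi) * of_real ((cmod (a k))^2)) has_sum
          integral {0..2*pi} (\<lambda>x. cnj (W a (0,x)) * W a (0,x))) UNIV"
    using W_integral_has_sum[OF a hc] by simp
  moreover have "(\<lambda>x. cnj (W a (0,x)) * W a (0,x)) = (\<lambda>x. of_real ((cmod (W a (0,x)))^2))"
    by (intro ext) (simp only: complex_norm_square mult.commute)
  moreover have "integral {0..2*pi} (\<lambda>x. complex_of_real ((cmod (W a (0,x)))^2))
        = of_real (integral {0..2*pi} (\<lambda>x. (cmod (W a (0,x)))^2))"
  proof -
    have "(\<lambda>x. (cmod (W a (0,x)))^2) integrable_on {0..2*pi}"
      by (intro integrable_continuous_interval continuous_intros W0_cont a)
    then show ?thesis using has_integral_of_real[OF integrable_integral] integral_unique by blast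
  qed
  ultimately have "((\<lambda>k. of_real (2*pi) * of_real ((cmod (a k))^2)) has_sum
      complex_of_real (integral {0..2*pi} (\<lambda>x. (cmod (W a (0,x)))^2))) UNIV" by simp
  from has_sum_Re[OF this] have "((\<lambda>k. 2*pi * (cmod (a k))^2) has_sum
      integral {0..2*pi} (\<lambda>x. (cmod (W a (0,x)))^2)) UNIV" by simp
  from has_sum_cmult_right[OF this, of "1/(2*pi)"] show ?thesis by simp
qed



lemma periodic_int:
  assumes "periodic2pi f"
  shows "f (x + 2 * pi * of_int n) = f x"
proof -
  have pos: "f (x + 2 * pi * real m) = f x" for x m
  proof (induction m arbitrary: x)
    case (Suc m)
    have "f (x + 2 * pi * real (Suc m)) = f ((x + 2 * pi * real m) + 2 * pi)"
      by (simp add: algebra_simps)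
    also have "\<dots> = f (x + 2 * pi * real m)" using assms unfolding periodic2pi_def by blast
    finally show ?case using Suc by simp
  qed simp
  show ?thesis
  proof (cases "n \<ge> 0")
    case True
    then show ?thesis using pos[of x "nat n"] by simp
  next
    case False
    then have "f (x + 2 * pi * of_int n) = f ((x + 2 * pi * of_int n) + 2 * pi * real (nat (-n)))"
      using pos[of "x + 2 * pi * of_int n" "nat (-n)", symmetric] by simp
    also have "\<dots> = f x" using False by (simp add: algebra_simps)
    finally show ?thesis .
  qed
qed

lemma isArg_same:
  assumes "periodic2pi r" "is_Arg z a" "is_Arg z b" "z \<noteq> 0"
  shows "r a = r b"
proof -
  have "of_real (norm z) * exp (\<i> * of_real a) = of_real (norm z) * exp (\<i> * of_real b)"
    using assms(2,3) unfolding is_Arg_def by metis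
  then have "exp (\<i> * of_real a) = exp (\<i> * of_real b)" using assms(4) by simp
  then obtain n :: int where n: "\<i> * of_real a = \<i> * of_real b + (of_int (2 * n) * pi) * \<i>"
    unfolding exp_eq by blast
  then have "Im (\<i> * of_real a) = Im (\<i> * of_real b + (of_int (2 * n) * pi) * \<i>)" by simp
  then have "a = b + 2 * pi * of_int n" by simp
  then show ?thesis using periodic_int[OF assms(1)] by simp
qed

inductive_set trig :: "(real \<Rightarrow> complex) set" where
  ee: "(\<lambda>x. ee k (0,x)) \<in> trig"
| cmult: "f \<in> trig \<Longrightarrow> (\<lambda>x. c * f x) \<in> trig"
| add: "f \<in> trig \<Longrightarrow> g \<in> trig \<Longrightarrow> (\<lambda>x. f x + g x) \<in> trig"

lemma trig_cont: "f \<in> trig \<Longrightarrow> continuous_on A f"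
  by (induction rule: trig.induct) (auto intro!: continuous_intros ee_cont)

lemma ee_mult: "ee k (0,x) * ee j (0,x) = ee (k + j) (0,x)"
  unfolding ee0 by (simp add: exp_add[symmetric] algebra_simps)

lemma trig_mult_ee: "f \<in> trig \<Longrightarrow> (\<lambda>x. ee k (0,x) * f x) \<in> trig"
proof (induction rule: trig.induct)
  case (ee j) then show ?case by (simp add: ee_mult trig.ee)
next
  case (cmult f c)
  have "(\<lambda>x. c * (ee k (0,x) * f x)) \<in> trig" by (rule trig.cmult[OF cmult.IH])
  then show ?case by (simp add: mult_ac)
next
  case (add f g)
  have "(\<lambda>x. ee k (0,x) * f x + ee k (0,x) * g x) \<in> trig" by (rule trig.add[OF add.IH])
  then show ?case by (simp add: distrib_left)
qed

lemma trig_mult: "f \<in> trig \<Longrightarrow> g \<in> trig \<Longrightarrow> (\<lambda>x. f x * g x) \<in> trig"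
proof (induction rule: trig.induct)
  case (ee k) then show ?case by (rule trig_mult_ee)
next
  case (cmult f c)
  have "(\<lambda>x. c * (f x * g x)) \<in> trig" by (rule trig.cmult[OF cmult.IH[OF cmult.prems]])
  then show ?case by (simp add: mult_ac)
next
  case (add f1 f2)
  have "(\<lambda>x. f1 x * g x + f2 x * g x) \<in> trig" by (rule trig.add[OF add.IH(1)[OF add.prems] add.IH(2)[OF add.prems]])
  then show ?case by (simp add: distrib_right)
qed

lemma trig_const: "(\<lambda>x. c) \<in> trig"
proof -
  have "(\<lambda>x. c * ee 0 (0,x)) \<in> trig" by (intro trig.cmult trig.ee)
  then show ?thesis by (simp add: ee0)
qed

lemma trig_cong: "f \<in> trig \<Longrightarrow> (\<And>x. f x = g x) \<Longrightarrow> g \<in> trig"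
proof -
  assume "f \<in> trig" "\<And>x. f x = g x"
  then have "f = g" by auto
  then show "g \<in> trig" using \<open>f \<in> trig\<close> by simp
qed

lemma trig_cos: "(\<lambda>x. complex_of_real (cos x)) \<in> trig"
proof (rule trig_cong)
  show "(\<lambda>x. (1/2) * ee 1 (0,x) + (1/2) * ee (-1) (0,x)) \<in> trig"
    by (intro trig.add trig.cmult trig.ee)
  fix x :: real
  show "(1/2) * ee 1 (0,x) + (1/2) * ee (-1) (0,x) = complex_of_real (cos x)"
    unfolding ee0 cos_of_real[symmetric] cos_exp_eq by (simp add: field_simps)
qed

lemma trig_sin: "(\<lambda>x. complex_of_real (sin x)) \<in> trig"
proof (rule trig_cong)
  show "(\<lambda>x. (1/(2*\<i>)) * ee 1 (0,x) + (-1/(2*\<i>)) * ee (-1) (0,x)) \<in> trig"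
    by (intro trig.add trig.cmult trig.ee)
  fix x :: real
  show "(1/(2*\<i>)) * ee 1 (0,x) + (-1/(2*\<i>)) * ee (-1) (0,x) = complex_of_real (sin x)"
    unfolding ee0 sin_of_real[symmetric] sin_exp_eq by (simp add: field_simps)
qed

lemma poly_trig:
  fixes g :: "complex \<Rightarrow> real"
  assumes "real_polynomial_function g"
  shows "(\<lambda>x. complex_of_real (g (cis x))) \<in> trig"
  using assms
proof induction
  case (linear f)
  have lin: "linear f" using linear bounded_linear.linear by blast
  have fz: "f z = Re z * f 1 + Im z * f \<i>" for z
  proof -
    have "z = Re z *\<^sub>R 1 + Im z *\<^sub>R \<i>" by (rule complex_eqI) simp_all
    then have "f z = f (Re z *\<^sub>R 1 + Im z *\<^sub>R \<i>)" by (rule arg_cong)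
    also have "\<dots> = Re z * f 1 + Im z * f \<i>"
      using linear_add[OF lin] linear_scale[OF lin] by simp
    finally show ?thesis .
  qed
  have e: "complex_of_real (f (cis x)) = of_real (f 1) * of_real (cos x) + of_real (f \<i>) * of_real (sin x)" for x
    unfolding fz[of "cis x"] by (simp only: cis.sel of_real_add of_real_mult mult.commute)
  have "(\<lambda>x. of_real (f 1) * complex_of_real (cos x) + of_real (f \<i>) * complex_of_real (sin x)) \<in> trig"
    by (intro trig.add trig.cmult trig_cos trig_sin)
  then show ?case by (rule trig_cong) (rule e[symmetric])
next
  case (const c) show ?case by (rule trig_const)
next
  case (add f g)
  have "(\<lambda>x. complex_of_real (f (cis x)) + complex_of_real (g (cis x))) \<in> trig" by (rule trig.add[OF add.IH])
  then show ?case by simp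
next
  case (mult f g)
  have "(\<lambda>x. complex_of_real (f (cis x)) * complex_of_real (g (cis x))) \<in> trig" by (rule trig_mult[OF mult.IH])
  then show ?case by simp
qed

lemma trig_orth:
  assumes h: "continuous_on {0..2*pi} h"
    and z: "\<And>k. integral {0..2*pi} (\<lambda>x. h x * ee k (0,x)) = 0"
    and p: "p \<in> trig"
  shows "integral {0..2*pi} (\<lambda>x. h x * p x) = 0"
  using p
proof induction
  case (ee k) then show ?case by (rule z)
next
  case (cmult f c)
  have "integral {0..2*pi} (\<lambda>x. h x * (c * f x)) = c * integral {0..2*pi} (\<lambda>x. h x * f x)"
    by (simp add: mult_ac)
  then show ?case using cmult by simp
next
  case (add f g)
  have "integral {0..2*pi} (\<lambda>x. h x * (f x + g x))
      = integral {0..2*pi} (\<lambda>x. h x * f x) + integral {0..2*pi} (\<lambda>x. h x * g x)"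
    unfolding distrib_left
    by (intro integral_add integrable_continuous_interval continuous_intros h trig_cont add.hyps)
  then show ?case using add by simp
qed



lemma is_Arg_Arg2pi: "is_Arg z (Arg2pi z)"
  using Arg2pi by blast

lemma is_Arg_Arg: "z \<noteq> 0 \<Longrightarrow> is_Arg z (Arg z)"
  unfolding is_Arg_def using Arg_eq by blast

lemma is_Arg_cis: "is_Arg (cis x) x"
  unfolding is_Arg_def by (simp add: cis_conv_exp)

lemma orth_real:
  fixes r :: "real \<Rightarrow> real"
  assumes rc: "continuous_on UNIV r" and rp: "periodic2pi r"
    and h: "continuous_on {0..2*pi} h"
    and orth: "\<And>p. p \<in> trig \<Longrightarrow> integral {0..2*pi} (\<lambda>x. h x * p x) = 0"
  shows "integral {0..2*pi} (\<lambda>x. h x * of_real (r x)) = 0"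
proof -
  define F where "F z = r (Arg2pi z)" for z
  have FA: "F z = r (Arg z)" if "z \<noteq> 0" for z
    unfolding F_def by (rule isArg_same[OF rp is_Arg_Arg2pi is_Arg_Arg[OF that] that])
  have rC: "isCont r x" for x using rc continuous_on_eq_continuous_at open_UNIV by blast
  have Fc: "continuous_on (sphere 0 1) F"
  proof (rule continuous_at_imp_continuous_on, rule ballI)
    fix z :: complex assume "z \<in> sphere 0 1"
    then have z0: "z \<noteq> 0" by auto
    show "isCont F z"
    proof (cases "z \<in> \<real>\<^sub>\<ge>\<^sub>0")
      case False
      show ?thesis unfolding F_def using continuous_at_Arg2pi[OF False] rC by (rule isCont_o2)
    next
      case True
      then have nz: "z \<notin> \<real>\<^sub>\<le>\<^sub>0" using z0
        by (auto simp: complex_nonneg_Reals_iff complex_nonpos_Reals_iff complex_eq_iff)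
      have c: "isCont (\<lambda>w. r (Arg w)) z" using continuous_at_Arg[OF nz] rC by (rule isCont_o2)
      have "eventually (\<lambda>w. w \<in> - {0}) (nhds z)"
        using z0 by (intro eventually_nhds_in_open) auto
      then have "eventually (\<lambda>w. F w = r (Arg w)) (nhds z)"
        by eventually_elim (use FA in auto)
      from isCont_cong[OF this] c show ?thesis by simp
    qed
  qed
  obtain H where H: "\<And>x. x \<in> {0..2*pi} \<Longrightarrow> norm (h x) \<le> H"
    using compact_imp_bounded[OF compact_continuous_image[OF h compact_Icc]]
    unfolding bounded_iff by blast
  have H0: "H \<ge> 0" using H[of 0] by (smt (verit) norm_ge_zero atLeastAtMost_iff pi_gt_zero)
  let ?I = "integral {0..2*pi} (\<lambda>x. h x * of_real (r x))"
  have bound: "norm ?I \<le> H * e * (2*pi)" if e: "e > 0" for e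
  proof -
    obtain g where g: "real_polynomial_function g" "\<And>z. z \<in> sphere 0 1 \<Longrightarrow> \<bar>F z - g z\<bar> < e"
      using Stone_Weierstrass_real_polynomial_function[OF compact_sphere Fc e] by blast
    have Fcis: "F (cis x) = r x" for x
      unfolding F_def by (rule isArg_same[OF rp is_Arg_Arg2pi is_Arg_cis]) simp
    have gc: "continuous_on A (\<lambda>x. complex_of_real (g (cis x)))" for A
      by (intro continuous_intros continuous_at_imp_continuous_on ballI
          continuous_on_compose2[of UNIV g] continuous_real_polymonial_function g(1)) auto
    have rc': "continuous_on A (\<lambda>x. complex_of_real (r x))" for A
      by (intro continuous_intros continuous_on_subset[OF rc]) auto
    have z: "integral {0..2*pi} (\<lambda>x. h x * of_real (g (cis x))) = 0"
      by (rule orth[OF poly_trig[OF g(1)]])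
    have "?I = integral {0..2*pi} (\<lambda>x. h x * of_real (r x) - h x * of_real (g (cis x)))"
      using z by (subst integral_diff)
        (auto intro!: integrable_continuous_interval continuous_intros h gc rc')
    also have "norm \<dots> \<le> H * e * (2*pi)"
    proof -
      have "norm (integral (cbox 0 (2*pi)) (\<lambda>x. h x * of_real (r x) - h x * of_real (g (cis x))))
          \<le> H * e * measure lborel (cbox 0 (2*pi))"
      proof (rule integrable_bound)
        show "0 \<le> H * e" using H0 e by simp
        show "(\<lambda>x. h x * of_real (r x) - h x * of_real (g (cis x))) integrable_on cbox 0 (2*pi)"
          by (auto intro!: integrable_continuous_interval continuous_intros h gc rc')
        fix x :: real assume "x \<in> cbox 0 (2*pi)"
        then have x: "x \<in> {0..2*pi}" by simp
        have "norm (h x * of_real (r x) - h x * of_real (g (cis x))) = norm (h x) * \<bar>r x - g (cis x)\<bar>"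
          by (simp add: right_diff_distrib[symmetric] norm_mult of_real_diff[symmetric] del: of_real_diff)
        also have "\<dots> \<le> H * e"
          using g(2)[of "cis x"] Fcis[of x] H[OF x] H0
          by (intro mult_mono) auto
        finally show "norm (h x * of_real (r x) - h x * of_real (g (cis x))) \<le> H * e" .
      qed
      then show ?thesis by simp
    qed
    finally show ?thesis by simp
  qed
  show ?thesis
  proof (rule ccontr)
    assume ne: "?I \<noteq> 0"
    define e where "e = norm ?I / ((H + 1) * (4*pi))"
    have e0: "e > 0" using ne H0 unfolding e_def by (simp add: divide_pos_pos)
    have "norm ?I \<le> H * e * (2*pi)" using bound[OF e0] .
    also have "\<dots> \<le> (H+1) * e * (2*pi)" using e0 by (simp add: mult_right_mono)
    also have "\<dots> = norm ?I / 2"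
    proof -
      have h1: "H + 1 \<noteq> 0" using H0 by simp
      have "(H+1) * e = norm ?I / (4*pi)" unfolding e_def using h1 by simp
      then show ?thesis by (simp add: field_simps)
    qed
    finally show False using ne by simp
  qed
qed

lemma fourier_unique:
  assumes hc: "continuous_on UNIV h" and hp: "periodic2pi h" and hz: "\<And>k. fcoeff h k = 0"
  shows "h x = 0"
proof -
  have hc': "continuous_on {0..2*pi} h" using continuous_on_subset[OF hc] by blast
  have z: "integral {0..2*pi} (\<lambda>x. h x * ee k (0,x)) = 0" for k
  proof -
    have "fcoeff h (-k) = 0" by (rule hz)
    then show ?thesis unfolding fcoeff_em em_ee by simp
  qed
  have orth: "\<And>p. p \<in> trig \<Longrightarrow> integral {0..2*pi} (\<lambda>x. h x * p x) = 0"
    by (rule trig_orth[OF hc' z])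
  have IRe: "integral {0..2*pi} (\<lambda>x. h x * of_real (Re (h x))) = 0"
    by (rule orth_real[OF _ _ hc' orth]) (use hp in \<open>auto intro!: continuous_intros hc simp: periodic2pi_def\<close>)
  have IIm: "integral {0..2*pi} (\<lambda>x. h x * of_real (Im (h x))) = 0"
    by (rule orth_real[OF _ _ hc' orth]) (use hp in \<open>auto intro!: continuous_intros hc simp: periodic2pi_def\<close>)
  have "(\<lambda>x. complex_of_real ((cmod (h x))^2)) = (\<lambda>x. h x * of_real (Re (h x)) - \<i> * (h x * of_real (Im (h x))))"
  proof
    fix x
    have "complex_of_real ((cmod (h x))^2) = h x * cnj (h x)" by (simp only: complex_norm_square)
    also have "cnj (h x) = of_real (Re (h x)) - \<i> * of_real (Im (h x))" by (simp add: complex_eq_iff)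
    finally show "complex_of_real ((cmod (h x))^2) = h x * of_real (Re (h x)) - \<i> * (h x * of_real (Im (h x)))"
      by (simp add: algebra_simps)
  qed
  then have "integral {0..2*pi} (\<lambda>x. complex_of_real ((cmod (h x))^2))
     = integral {0..2*pi} (\<lambda>x. h x * of_real (Re (h x)) - \<i> * (h x * of_real (Im (h x))))" by simp
  also have "\<dots> = integral {0..2*pi} (\<lambda>x. h x * of_real (Re (h x))) - integral {0..2*pi} (\<lambda>x. \<i> * (h x * of_real (Im (h x))))"
    by (rule integral_diff) (auto intro!: integrable_continuous_interval continuous_intros hc')
  also have "\<dots> = 0" using IRe IIm by simp
  finally have "integral {0..2*pi} (\<lambda>x. complex_of_real ((cmod (h x))^2)) = 0" .
  moreover have "(\<lambda>x. (cmod (h x))^2) integrable_on {0..2*pi}"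
    by (intro integrable_continuous_interval continuous_intros hc')
  ultimately have "complex_of_real (integral {0..2*pi} (\<lambda>x. (cmod (h x))^2)) = 0"
    using has_integral_of_real[OF integrable_integral] integral_unique by metis
  then have "integral {0..2*pi} (\<lambda>x. (cmod (h x))^2) = 0" by simp
  then have hz0: "\<forall>y\<in>{0..2*pi}. (cmod (h y))^2 = 0"
    by (subst (asm) integral_eq_0_iff) (auto intro!: continuous_intros hc')
  define n where "n = \<lfloor>x / (2*pi)\<rfloor>"
  define y where "y = x - 2 * pi * of_int n"
  have "of_int n \<le> x / (2*pi)" "x / (2*pi) < of_int n + 1" unfolding n_def by linarith+
  then have "2*pi * of_int n \<le> x" "x < 2*pi * (of_int n + 1)"
    by (simp_all add: field_simps)
  then have y: "y \<in> {0..2*pi}" unfolding y_def by (simp add: algebra_simps)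
  have "h x = h (y + 2 * pi * of_int n)" unfolding y_def by simp
  also have "\<dots> = h y" by (rule periodic_int[OF hp])
  finally show ?thesis using hz0 y by simp
qed

lemma fcoeff_diff:
  assumes "continuous_on {0..2*pi} f" "continuous_on {0..2*pi} g"
  shows "fcoeff (\<lambda>x. f x - g x) k = fcoeff f k - fcoeff g k"
  unfolding fcoeff_em left_diff_distrib
  by (subst integral_diff) (auto intro!: integrable_continuous_interval continuous_intros em_cont assms
      simp: right_diff_distrib)

lemma fourier_inversion:
  assumes fc: "continuous_on UNIV f" and fp: "periodic2pi f" and r: "rapid (fcoeff f)"
  shows "f x = W (fcoeff f) (0,x)"
proof -
  let ?h = "\<lambda>x. f x - W (fcoeff f) (0,x)"
  have "?h x = 0"
  proof (rule fourier_unique)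
    show "continuous_on UNIV ?h" by (intro continuous_intros fc W0_cont r)
    show "periodic2pi ?h" using fp W_periodic unfolding periodic2pi_def by simp
    fix k
    have "fcoeff ?h k = fcoeff f k - fcoeff (\<lambda>x. W (fcoeff f) (0,x)) k"
      by (rule fcoeff_diff) (auto intro: continuous_on_subset[OF fc] W0_cont r)
    then show "fcoeff ?h k = 0" using fcoeff_W[OF r] by simp
  qed
  then show ?thesis by simp
qed



lemma em_2pi: "em k (2*pi) = 1"
  unfolding em_def by (rule exp_2pi_int[where m="-k"]) simp

lemma em_0: "em k 0 = 1"
  unfolding em_def by simp

lemma norm_em [simp]: "norm (em k x) = 1"
  by (simp add: em_ee)

lemma fcoeff_deriv:
  assumes d: "\<And>x. (f has_vector_derivative f' x) (at x)" and c': "continuous_on UNIV f'"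
    and p: "periodic2pi f"
  shows "fcoeff f' k = \<i> * of_int k * fcoeff f k"
proof -
  let ?c = "- \<i> * of_int k :: complex"
  have fc: "continuous_on UNIV f"
    using d has_vector_derivative_continuous continuous_at_imp_continuous_on by blast
  have em_d: "(em k has_vector_derivative (?c * em k x)) (at x)" for x
    unfolding em_def by (rule vd_exp)
  have "(\<lambda>x. f x * em k x) integrable_on {0..2*pi}"
    by (intro integrable_continuous_interval continuous_intros em_cont continuous_on_subset[OF fc]) auto
  then obtain J where J: "((\<lambda>x. f x * em k x) has_integral J) {0..2*pi}" by blast
  have J2: "((\<lambda>x. f x * (?c * em k x)) has_integral (?c * J)) {0..2*pi}"
    using has_integral_mult_right[OF J, of ?c] by (simp add: mult_ac)
  have f2: "f (2*pi) = f 0" using p unfolding periodic2pi_def by (metis add_0)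
  have "((\<lambda>x. f' x * em k x) has_integral (- (?c * J))) {0..2*pi}"
  proof (rule integration_by_parts[OF bounded_bilinear_mult, of 0 "2*pi" f "em k" f' "\<lambda>x. ?c * em k x"])
    show "continuous_on {0..2*pi} f" using continuous_on_subset[OF fc] by blast
    show "continuous_on {0..2*pi} (em k)" by (rule em_cont)
    show "\<And>x. x \<in> {0..2*pi} \<Longrightarrow> (f has_vector_derivative f' x) (at x)" using d by blast
    show "\<And>x. x \<in> {0..2*pi} \<Longrightarrow> (em k has_vector_derivative ?c * em k x) (at x)" using em_d by blast
    show "((\<lambda>x. f x * (?c * em k x)) has_integral f (2*pi) * em k (2*pi) - f 0 * em k 0 - - (?c * J)) {0..2*pi}"
      using J2 by (simp add: f2 em_2pi em_0)
  qed simp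
  then have "integral {0..2*pi} (\<lambda>x. f' x * em k x) = - (?c * J)" by (rule integral_unique)
  moreover have "integral {0..2*pi} (\<lambda>x. f x * em k x) = J" using J by (rule integral_unique)
  ultimately show ?thesis unfolding fcoeff_em by simp
qed

lemma fcoeff_bound:
  assumes "continuous_on {0..2*pi} g" "\<And>x. x \<in> {0..2*pi} \<Longrightarrow> norm (g x) \<le> B" "B \<ge> 0"
  shows "cmod (fcoeff g k) \<le> B"
proof -
  have "norm (integral (cbox 0 (2*pi)) (\<lambda>x. g x * em k x)) \<le> B * measure lborel (cbox 0 (2*pi))"
    by (rule integrable_bound)
       (use assms in \<open>auto intro!: integrable_continuous_interval continuous_intros em_cont simp: norm_mult\<close>)
  then have "norm (integral {0..2*pi} (\<lambda>x. g x * em k x)) \<le> B * (2*pi)" by simp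
  moreover have "cmod (fcoeff g k) = norm (integral {0..2*pi} (\<lambda>x. g x * em k x)) / (2*pi)"
    unfolding fcoeff_em by (simp add: norm_mult norm_divide)
  ultimately show ?thesis by (simp add: divide_le_eq)
qed

lemma pow_bound: "(1 + t)^m \<le> 2^m * (1 + t^m)" if "t \<ge> 0" for t :: real
proof -
  have "(1 + t)^m \<le> (2 * max 1 t)^m" using that by (intro power_mono) auto
  also have "\<dots> = 2^m * (max 1 t)^m" by (simp add: power_mult_distrib)
  also have "(max 1 t)^m \<le> 1 + t^m"
    using that by (cases "t \<le> 1") (auto simp: max_def)
  then have "2^m * (max 1 t)^m \<le> 2^m * (1 + t^m)" by (intro mult_left_mono) auto
  finally show ?thesis .
qed

lemma smooth_periodic_rapid:
  fixes f :: "real \<Rightarrow> complex"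
  assumes sf: "smooth f" and pf: "periodic2pi f"
  shows "rapid (fcoeff f)"
proof -
  define nd where "nd g = (SOME g'. (\<forall>x. (g has_vector_derivative g' x) (at x)) \<and> smooth g')"
    for g :: "real \<Rightarrow> complex"
  have ndP: "(\<forall>x. (g has_vector_derivative nd g x) (at x)) \<and> smooth (nd g)" if sg: "smooth g" for g
  proof -
    obtain g' where "\<And>x. (g has_vector_derivative g' x) (at x)" "smooth g'"
      using smooth_1d_deriv[OF sg] by blast
    then have "\<exists>g'. (\<forall>x. (g has_vector_derivative g' x) (at x)) \<and> smooth g'" by blast
    then show ?thesis unfolding nd_def by (rule someI_ex)
  qed
  define D where "D n = (nd ^^ n) f" for n
  have DS: "D (Suc n) = nd (D n)" for n unfolding D_def by simp
  have sm: "smooth (D n)" for n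
    by (induction n) (auto simp: DS ndP D_def[of 0] sf)
  have dd: "(D n has_vector_derivative D (Suc n) x) (at x)" for n x
    unfolding DS using ndP[OF sm[of n]] by blast
  have cont: "continuous_on A (D n)" for n A by (rule smooth_continuous[OF sm])
  have per: "periodic2pi (D n)" for n
  proof (induction n)
    case 0 then show ?case using pf by (simp add: D_def)
  next
    case (Suc n)
    show ?case unfolding periodic2pi_def
    proof
      fix x
      have s: "((\<lambda>y. y + 2*pi) has_vector_derivative 1) (at x)"
        by (auto intro!: derivative_eq_intros)
      have "((D n \<circ> (\<lambda>y. y + 2*pi)) has_vector_derivative (1 *\<^sub>R D (Suc n) (x + 2*pi))) (at x)"
        by (rule vector_diff_chain_at[OF s dd])
      moreover have "D n \<circ> (\<lambda>y. y + 2*pi) = D n" using Suc unfolding periodic2pi_def by auto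
      ultimately have "(D n has_vector_derivative D (Suc n) (x + 2*pi)) (at x)" by simp
      then show "D (Suc n) (x + 2 * pi) = D (Suc n) x" using dd vector_derivative_unique_at by blast
    qed
  qed
  have coef: "fcoeff (D n) k = (\<i> * of_int k)^n * fcoeff f k" for n k
  proof (induction n)
    case 0 then show ?case by (simp add: D_def)
  next
    case (Suc n)
    have "fcoeff (D (Suc n)) k = \<i> * of_int k * fcoeff (D n) k"
      by (rule fcoeff_deriv[OF dd cont per])
    then show ?case using Suc by simp
  qed
  have bnd: "\<exists>B\<ge>0. \<forall>k. cmod (fcoeff (D n) k) \<le> B" for n
  proof -
    obtain B where B: "\<And>x. x \<in> {0..2*pi} \<Longrightarrow> norm (D n x) \<le> B"
      using compact_imp_bounded[OF compact_continuous_image[OF cont compact_Icc]]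
      unfolding bounded_iff by blast
    have B0: "B \<ge> 0" using B[of 0] norm_ge_zero[of "D n 0"] by (smt (verit) atLeastAtMost_iff pi_gt_zero)
    show ?thesis using fcoeff_bound[OF cont B B0] B0 by blast
  qed
  show ?thesis unfolding rapid_def
  proof
    fix m
    obtain B0 where B0: "B0 \<ge> 0" "\<And>k. cmod (fcoeff (D 0) k) \<le> B0" using bnd by blast
    obtain Bm where Bm: "Bm \<ge> 0" "\<And>k. cmod (fcoeff (D m) k) \<le> Bm" using bnd by blast
    have "(1 + \<bar>real_of_int k\<bar>)^m * cmod (fcoeff f k) \<le> 2^m * (B0 + Bm)" for k
    proof -
      have "(1 + \<bar>real_of_int k\<bar>)^m * cmod (fcoeff f k) \<le> 2^m * (1 + \<bar>real_of_int k\<bar>^m) * cmod (fcoeff f k)"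
        by (intro mult_right_mono pow_bound) auto
      also have "\<dots> = 2^m * (cmod (fcoeff (D 0) k) + cmod (fcoeff (D m) k))"
        by (simp add: coef norm_mult norm_power algebra_simps)
      also have "\<dots> \<le> 2^m * (B0 + Bm)" by (intro mult_left_mono add_mono B0 Bm) auto
      finally show ?thesis .
    qed
    then show "\<exists>B. \<forall>k. (1 + \<bar>real_of_int k\<bar>)^m * cmod (fcoeff f k) \<le> B" by blast
  qed
qed



lemma cs_infsum:
  fixes x y :: "'a \<Rightarrow> real"
  assumes x0: "\<And>k. x k \<ge> 0" and y0: "\<And>k. y k \<ge> 0"
    and xs: "(\<lambda>k. (x k)^2) summable_on A" and ys: "(\<lambda>k. (y k)^2) summable_on A"
  shows "(\<lambda>k. x k * y k) summable_on A"
    and "(\<Sum>\<^sub>\<infinity>k\<in>A. x k * y k) \<le> sqrt (\<Sum>\<^sub>\<infinity>k\<in>A. (x k)^2) * sqrt (\<Sum>\<^sub>\<infinity>k\<in>A. (y k)^2)"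
proof -
  have amgm: "x k * y k \<le> (t/2) * (x k)^2 + (1/(2*t)) * (y k)^2" if t: "t > 0" for t k
  proof -
    have "0 \<le> (t * x k - y k)^2" by simp
    then have "2 * t * (x k * y k) \<le> t * (t * (x k)^2) + (y k)^2"
      by (simp add: power2_eq_square algebra_simps)
    then have "t * (2 * (x k * y k)) \<le> t * (t * (x k)^2 + (y k)^2 / t)"
      using t by (simp add: algebra_simps)
    then have "2 * (x k * y k) \<le> t * (x k)^2 + (y k)^2 / t" using t by simp
    then show ?thesis by (simp add: field_simps)
  qed
  have sum_t: "(\<lambda>k. (t/2) * (x k)^2 + (1/(2*t)) * (y k)^2) summable_on A" for t
    by (intro summable_on_add summable_on_cmult_right xs ys)
  show xys: "(\<lambda>k. x k * y k) summable_on A"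
    by (rule summable_on_comparison_test[OF sum_t[of 1]]) (use amgm[of 1] x0 y0 in auto)
  define X where "X = (\<Sum>\<^sub>\<infinity>k\<in>A. (x k)^2)"
  define Y where "Y = (\<Sum>\<^sub>\<infinity>k\<in>A. (y k)^2)"
  define S where "S = (\<Sum>\<^sub>\<infinity>k\<in>A. x k * y k)"
  have X0: "X \<ge> 0" unfolding X_def by (intro infsum_nonneg) auto
  have Y0: "Y \<ge> 0" unfolding Y_def by (intro infsum_nonneg) auto
  have St: "S \<le> (t * X + Y / t) / 2" if t: "t > 0" for t
  proof -
    have "S \<le> (\<Sum>\<^sub>\<infinity>k\<in>A. (t/2) * (x k)^2 + (1/(2*t)) * (y k)^2)"
      unfolding S_def by (intro infsum_mono xys sum_t amgm t)
    also have "\<dots> = (\<Sum>\<^sub>\<infinity>k\<in>A. (t/2) * (x k)^2) + (\<Sum>\<^sub>\<infinity>k\<in>A. (1/(2*t)) * (y k)^2)"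
      by (rule infsum_add) (intro summable_on_cmult_right xs ys)+
    also have "\<dots> = (t/2) * X + (1/(2*t)) * Y"
      unfolding X_def Y_def by (simp only: infsum_cmult_right')
    also have "\<dots> = (t * X + Y / t) / 2" by (simp add: field_simps)
    finally show ?thesis .
  qed
  show "S \<le> sqrt X * sqrt Y"
  proof (cases "X > 0 \<and> Y > 0")
    case True
    define t where "t = sqrt Y / sqrt X"
    have t: "t > 0" using True unfolding t_def by simp
    have "t * X + Y / t = 2 * (sqrt X * sqrt Y)"
      using True unfolding t_def
      by (simp add: field_simps real_sqrt_mult[symmetric])
    then show ?thesis using St[OF t] by simp
  next
    case False
    show ?thesis
    proof (rule ccontr)
      assume "\<not> S \<le> sqrt X * sqrt Y"
      then have S0: "S > 0" using X0 Y0 by (smt (verit) real_sqrt_ge_zero mult_nonneg_nonneg)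
      show False
      proof (cases "X = 0")
        case True
        define t where "t = (Y + 1) / S"
        have t: "t > 0" using S0 Y0 unfolding t_def by simp
        have "S \<le> Y / t / 2" using St[OF t] True by simp
        also have "\<dots> = Y * S / (2 * (Y + 1))" unfolding t_def using S0 Y0 by (simp add: field_simps)
        also have "\<dots> < S" using S0 Y0 by (simp add: field_simps add_nonneg_pos)
        finally show False by simp
      next
        case False
        then have Y: "Y = 0" using \<open>\<not> (X > 0 \<and> Y > 0)\<close> X0 Y0 by auto
        define t where "t = S / (X + 1)"
        have t: "t > 0" using S0 X0 unfolding t_def by simp
        have "S \<le> t * X / 2" using St[OF t] Y by simp
        also have "\<dots> = S * X / (2 * (X + 1))" unfolding t_def using S0 X0 by (simp add: field_simps)
        also have "\<dots> < S" using S0 X0 by (simp add: field_simps add_nonneg_pos)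
        finally show False by simp
      qed
    qed
  qed
qed



lemma pw_main:
  fixes c \<kappa> N s p :: real
  assumes p: "p > 2" and s: "s > 0" and k: "\<kappa> \<ge> 1" and N: "N > 0" and c: "c \<ge> 0"
  shows "c^2 \<le> N powr (2-p) * (\<kappa> powr s * c) powr p + N^2 * \<kappa> powr (- (2 * (2 * s / (p - 2)) + 2 * s))"
proof -
  define r where "r = 2 * s / (p - 2)"
  have r: "r > 0" using p s unfolding r_def by simp
  have rp: "r * (p - 2) = 2 * s" using p unfolding r_def by simp
  define b where "b = \<kappa> powr s * c"
  define \<beta> where "\<beta> = b / N"
  have k0: "\<kappa> > 0" using k by simp
  have b0: "b \<ge> 0" unfolding b_def using c by simp
  have be0: "\<beta> \<ge> 0" unfolding \<beta>_def using b0 N by simp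
  have c_eq: "c = N * \<beta> * \<kappa> powr (- s)"
    unfolding \<beta>_def b_def using N k0 by (simp add: powr_minus field_simps)
  have c2: "c^2 = N^2 * \<beta>^2 * \<kappa> powr (- (2 * s))"
  proof -
    have "(\<kappa> powr (- s))^2 = \<kappa> powr (- (2 * s))"
      using k0 by (simp add: powr_realpow[symmetric] powr_powr mult.commute)
    then show ?thesis unfolding c_eq by (simp add: power_mult_distrib)
  qed
  have T1: "0 \<le> N powr (2-p) * (\<kappa> powr s * c) powr p" by simp
  have T2: "0 \<le> N^2 * \<kappa> powr (- (2 * r + 2 * s))" by simp
  show ?thesis
  proof (cases "\<beta> \<le> \<kappa> powr (- r)")
    case True
    have "\<beta>^2 \<le> (\<kappa> powr (- r))^2" using True be0 by (intro power_mono) auto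
    also have "(\<kappa> powr (- r))^2 = \<kappa> powr (- (2 * r))"
      using k0 by (simp add: powr_realpow[symmetric] powr_powr mult.commute)
    finally have "c^2 \<le> N^2 * \<kappa> powr (- (2 * r)) * \<kappa> powr (- (2 * s))"
      unfolding c2 by (intro mult_right_mono mult_left_mono) auto
    also have "\<dots> = N^2 * \<kappa> powr (- (2 * r + 2 * s))"
      by (simp add: powr_add[symmetric] algebra_simps)
    finally have "c^2 \<le> N^2 * \<kappa> powr (- (2 * r + 2 * s))" .
    then show ?thesis using T1 unfolding r_def by linarith
  next
    case False
    then have bpos: "\<beta> > 0" using k0 by (smt (verit) powr_gt_zero)
    have "\<kappa> powr (- (2 * s)) = (\<kappa> powr (- r)) powr (p-2)"
      using rp by (simp add: powr_powr)
    also have "\<dots> \<le> \<beta> powr (p-2)" using False p by (intro powr_mono2) auto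
    finally have c2le: "c^2 \<le> N^2 * (\<beta>^2 * \<beta> powr (p-2))"
      unfolding c2 mult.assoc by (intro mult_left_mono) auto
    have e1: "\<beta>^2 * \<beta> powr (p-2) = \<beta> powr p"
    proof -
      have "\<beta>^2 = \<beta> powr 2" using be0 by simp
      then have "\<beta>^2 * \<beta> powr (p-2) = \<beta> powr (2 + (p-2))" by (simp only: powr_add)
      then show ?thesis by simp
    qed
    have e2: "N^2 * \<beta> powr p = N powr (2-p) * b powr p"
    proof -
      have "\<beta> powr p = b powr p / N powr p" unfolding \<beta>_def by (rule powr_divide)
      moreover have "N^2 = N powr (2-p) * N powr p"
      proof -
        have "N powr (2-p) * N powr p = N powr ((2-p) + p)" by (simp only: powr_add)
        also have "\<dots> = N^2" using N by simp
        finally show ?thesis by simp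
      qed
      ultimately show ?thesis using N by simp
    qed
    have "c^2 \<le> N powr (2-p) * b powr p" using c2le e1 e2 by simp
    then show ?thesis using T2 unfolding b_def r_def by linarith
  qed
qed


definition FLc :: "real \<Rightarrow> real \<Rightarrow> (int \<Rightarrow> complex) \<Rightarrow> real" where
  "FLc s p a = (\<Sum>\<^sub>\<infinity>k\<in>UNIV - {0::int}. (\<bar>real_of_int k\<bar> powr s * cmod (a k)) powr p) powr (1 / p)"

lemma FL_norm_FLc: "FL_norm s p f = FLc s p (fcoeff f)"
  by (simp add: FL_norm_def FLc_def)

lemma zsig_summable:
  assumes sig: "\<sigma> > 1"
  shows "(\<lambda>k::int. \<bar>real_of_int k\<bar> powr (- \<sigma>)) summable_on (UNIV - {0})"
proof -
  define g where "g k = (if k = 0 then 0 else \<bar>real_of_int k\<bar> powr (- \<sigma>))" for k :: int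
  have sn: "summable (\<lambda>n. real (Suc n) powr (- \<sigma>))"
    using summable_real_powr_iff[of "- \<sigma>"] sig by (subst summable_Suc_iff) simp
  have "summable (\<lambda>n. g (dec n))"
  proof (rule summable_comparison_test'[where g="\<lambda>n. 4 powr \<sigma> * real (Suc n) powr (- \<sigma>)"])
    show "summable (\<lambda>n. 4 powr \<sigma> * real (Suc n) powr (- \<sigma>))" by (intro summable_mult sn)
    fix n :: nat assume "n \<ge> 0"
    show "norm (g (dec n)) \<le> 4 powr \<sigma> * real (Suc n) powr (- \<sigma>)"
    proof (cases "dec n = 0")
      case True then show ?thesis by (simp add: g_def)
    next
      case False
      then have k1: "\<bar>real_of_int (dec n)\<bar> \<ge> 1" by linarith
      have "real n + 1 \<le> 2 * (1 + \<bar>real_of_int (dec n)\<bar>)" by (rule dec_bound)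
      then have le: "real (Suc n) / 4 \<le> \<bar>real_of_int (dec n)\<bar>" using k1 by simp
      have "\<bar>real_of_int (dec n)\<bar> powr (- \<sigma>) \<le> (real (Suc n) / 4) powr (- \<sigma>)"
        by (rule powr_mono2'[OF _ _ le]) (use sig in auto)
      also have "\<dots> = 4 powr \<sigma> * real (Suc n) powr (- \<sigma>)"
        unfolding powr_minus powr_divide inverse_divide by (simp add: divide_inverse)
      finally show ?thesis using False by (simp add: g_def)
    qed
  qed
  then have "g summable_on UNIV" by (intro summable_on_int_via_dec) (auto simp: g_def)
  then have "g summable_on (UNIV - {0})" by (rule summable_on_subset_banach) auto
  then show ?thesis by (rule summable_on_cong[THEN iffD1, rotated]) (auto simp: g_def)
qed

lemma FL_terms_summable:
  assumes a: "rapid a" and p: "p \<ge> 2" and s: "s \<ge> 0"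
  shows "(\<lambda>k. (\<bar>real_of_int k\<bar> powr s * cmod (a k)) powr p) summable_on (UNIV - {0})"
proof -
  define m0 where "m0 = nat \<lceil>s\<rceil>"
  obtain B where B: "\<And>k. (1 + \<bar>real_of_int k\<bar>)^(m0 + 1) * cmod (a k) \<le> B"
    using a unfolding rapid_def by blast
  have B0: "B \<ge> 0" using B[of 0] by (smt (verit) norm_ge_zero mult_nonneg_nonneg zero_le_power)
  have "(\<lambda>k. B powr p * w2 k) summable_on (UNIV - {0})"
    by (rule summable_on_subset_banach[OF summable_on_cmult_right[OF w2_summable]]) auto
  then show ?thesis
  proof (rule summable_on_comparison_test)
    fix k :: int assume "k \<in> UNIV - {0}"
    then have k1: "\<bar>real_of_int k\<bar> \<ge> 1" by auto
    have "\<bar>real_of_int k\<bar> powr s \<le> \<bar>real_of_int k\<bar> powr (real m0)"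
      using k1 unfolding m0_def by (intro powr_mono) linarith+
    also have "\<dots> = \<bar>real_of_int k\<bar> ^ m0" using k1 by (simp add: powr_realpow)
    also have "\<dots> \<le> (1 + \<bar>real_of_int k\<bar>) ^ m0" by (intro power_mono) auto
    finally have e1: "\<bar>real_of_int k\<bar> powr s * cmod (a k) \<le> (1 + \<bar>real_of_int k\<bar>) ^ m0 * cmod (a k)"
      by (intro mult_right_mono) auto
    also have "\<dots> \<le> B / (1 + \<bar>real_of_int k\<bar>)"
    proof -
      have "(1 + \<bar>real_of_int k\<bar>) ^ m0 * cmod (a k) * (1 + \<bar>real_of_int k\<bar>)
          = (1 + \<bar>real_of_int k\<bar>)^(m0 + 1) * cmod (a k)"
        by (simp only: power_add power_one_right mult_ac)
      then have "(1 + \<bar>real_of_int k\<bar>) ^ m0 * cmod (a k) * (1 + \<bar>real_of_int k\<bar>) \<le> B"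
        using B[of k] by (simp add: mult_ac)
      then show ?thesis by (subst pos_le_divide_eq) auto
    qed
    finally have e2: "\<bar>real_of_int k\<bar> powr s * cmod (a k) \<le> B / (1 + \<bar>real_of_int k\<bar>)" .
    have "(\<bar>real_of_int k\<bar> powr s * cmod (a k)) powr p \<le> (B / (1 + \<bar>real_of_int k\<bar>)) powr p"
      using e2 p by (intro powr_mono2) auto
    also have "\<dots> = B powr p / (1 + \<bar>real_of_int k\<bar>) powr p" by (rule powr_divide)
    also have "\<dots> \<le> B powr p / (1 + \<bar>real_of_int k\<bar>) powr 2"
    proof (rule divide_left_mono)
      show "(1 + \<bar>real_of_int k\<bar>) powr 2 \<le> (1 + \<bar>real_of_int k\<bar>) powr p"
        using p by (intro powr_mono) auto
    qed auto
    also have "\<dots> = B powr p * w2 k" by (simp add: w2_def)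
    finally show "(\<bar>real_of_int k\<bar> powr s * cmod (a k)) powr p \<le> B powr p * w2 k" .
  qed auto
qed



lemma sq_summable:
  assumes a: "rapid a"
  shows "(\<lambda>k. (cmod (a k))^2) summable_on A"
proof -
  obtain B where B: "\<And>k. (1 + \<bar>real_of_int k\<bar>)^0 * cmod (a k) \<le> B" using a unfolding rapid_def by blast
  have "(\<lambda>k. B * cmod (a k)) summable_on UNIV" by (intro summable_on_cmult_right rapid_summable0 a)
  then have "(\<lambda>k. (cmod (a k))^2) summable_on UNIV"
    by (rule summable_on_comparison_test)
       (use B in \<open>auto simp: power2_eq_square intro: mult_right_mono\<close>)
  then show ?thesis by (rule summable_on_subset_banach) auto
qed

lemma FL_control:
  assumes hyp: "(s > 1/2 - 1/p \<and> p > 2) \<or> (s \<ge> 0 \<and> p = 2)"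
  shows "\<exists>K\<ge>0. \<forall>a. rapid a \<longrightarrow> a 0 = 0 \<longrightarrow> (\<Sum>\<^sub>\<infinity>k. (cmod (a k))^2) \<le> K * (FLc s p a)^2"
proof -
  have p2: "p \<ge> 2" using hyp by auto
  have s0: "s \<ge> 0"
  proof (cases "p = 2")
    case True then show ?thesis using hyp by auto
  next
    case False
    then have "s > 1/2 - 1/p" "p > 2" using hyp by auto
    moreover have "1/p < 1/2" using \<open>p > 2\<close> by (simp add: field_simps)
    ultimately show ?thesis by linarith
  qed
  define \<sigma> where "\<sigma> = 2 * (2 * s / (p - 2)) + 2 * s"
  define Z where "Z = (\<Sum>\<^sub>\<infinity>k\<in>UNIV - {0::int}. \<bar>real_of_int k\<bar> powr (- \<sigma>))"
  define K where "K = (if p = 2 then 1 else 1 + Z)"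
  have sig: "\<sigma> > 1" if p2': "p > 2" "s > 1/2 - 1/p"
  proof -
    have "2 * s * p > p - 2"
    proof -
      have "s * (2 * p) > (1/2 - 1/p) * (2 * p)" using that by (intro mult_strict_right_mono) auto
      also have "(1/2 - 1/p) * (2 * p) = p - 2" using that by (simp add: field_simps)
      finally show ?thesis by (simp add: mult_ac)
    qed
    then have "2 * s * p / (p - 2) > 1" using that by (simp add: less_divide_eq)
    moreover have "\<sigma> = 2 * s * p / (p - 2)" unfolding \<sigma>_def using that by (simp add: field_simps)
    ultimately show ?thesis by simp
  qed
  have Z0: "Z \<ge> 0" unfolding Z_def by (intro infsum_nonneg) auto
  have K0: "K \<ge> 0" unfolding K_def using Z0 by auto
  have "(\<Sum>\<^sub>\<infinity>k. (cmod (a k))^2) \<le> K * (FLc s p a)^2" if a: "rapid a" and a0: "a 0 = 0" for a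
  proof -
    define A where "A = UNIV - {0::int}"
    define bt where "bt k = (\<bar>real_of_int k\<bar> powr s * cmod (a k)) powr p" for k
    define T where "T = (\<Sum>\<^sub>\<infinity>k\<in>A. bt k)"
    define N where "N = T powr (1/p)"
    have btS: "bt summable_on A" unfolding bt_def A_def by (rule FL_terms_summable[OF a p2 s0])
    have FLN: "FLc s p a = N" unfolding FLc_def N_def T_def A_def bt_def by simp
    have T0: "T \<ge> 0" unfolding T_def bt_def by (intro infsum_nonneg) auto
    have N0: "N \<ge> 0" unfolding N_def by simp
    have NpT: "N powr p = T" unfolding N_def using T0 p2 by (simp add: powr_powr)
    have Seq: "(\<Sum>\<^sub>\<infinity>k. (cmod (a k))^2) = (\<Sum>\<^sub>\<infinity>k\<in>A. (cmod (a k))^2)"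
      unfolding A_def by (rule infsum_cong_neutral) (auto simp: a0)
    have sqS: "(\<lambda>k. (cmod (a k))^2) summable_on A" by (rule sq_summable[OF a])
    show ?thesis
    proof (cases "N = 0")
      case True
      then have "T = 0" using NpT p2 by simp
      then have "bt k = 0" if "k \<in> A" for k
        using nonneg_infsum_le_0D[OF _ btS _ that] unfolding T_def bt_def by auto
      then have "a k = 0" if "k \<in> A" for k using that unfolding bt_def A_def by auto
      then have "(\<Sum>\<^sub>\<infinity>k\<in>A. (cmod (a k))^2) = 0" by (intro infsum_0) auto
      then show ?thesis using Seq True FLN by simp
    next
      case False
      then have Npos: "N > 0" using N0 by simp
      show ?thesis
      proof (cases "p = 2")
        case True
        have "(\<Sum>\<^sub>\<infinity>k\<in>A. (cmod (a k))^2) \<le> T" unfolding T_def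
        proof (rule infsum_mono[OF sqS btS])
          fix k assume "k \<in> A"
          then have k1: "\<bar>real_of_int k\<bar> \<ge> 1" unfolding A_def by auto
          have "1 \<le> \<bar>real_of_int k\<bar> powr s" using k1 s0 by (rule ge_one_powr_ge_zero)
          then have "cmod (a k) \<le> \<bar>real_of_int k\<bar> powr s * cmod (a k)"
            by (metis mult_le_cancel_right1 norm_ge_zero order_refl mult_right_mono mult_1)
          then have "(cmod (a k))^2 \<le> (\<bar>real_of_int k\<bar> powr s * cmod (a k))^2"
            by (intro power_mono) auto
          then show "(cmod (a k))^2 \<le> bt k" unfolding bt_def True by simp
        qed
        also have "T = N^2" using NpT True Npos by simp
        finally show ?thesis using Seq FLN True unfolding K_def by simp
      next
        case False
        then have p2': "p > 2" and sh: "s > 1/2 - 1/p" using hyp by auto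
        have spos: "s > 0"
        proof -
          have "1/p < 1/2" using p2' by (simp add: field_simps)
          then show ?thesis using sh by linarith
        qed
        have zs: "(\<lambda>k::int. \<bar>real_of_int k\<bar> powr (- \<sigma>)) summable_on A"
          unfolding A_def by (rule zsig_summable[OF sig[OF p2' sh]])
        have "(\<Sum>\<^sub>\<infinity>k\<in>A. (cmod (a k))^2) \<le> (\<Sum>\<^sub>\<infinity>k\<in>A. N powr (2-p) * bt k + N^2 * \<bar>real_of_int k\<bar> powr (- \<sigma>))"
        proof (rule infsum_mono[OF sqS])
          show "(\<lambda>k. N powr (2-p) * bt k + N^2 * \<bar>real_of_int k\<bar> powr (- \<sigma>)) summable_on A"
            by (intro summable_on_add summable_on_cmult_right btS zs)
          fix k assume "k \<in> A"
          then have k1: "\<bar>real_of_int k\<bar> \<ge> 1" unfolding A_def by auto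
          show "(cmod (a k))^2 \<le> N powr (2-p) * bt k + N^2 * \<bar>real_of_int k\<bar> powr (- \<sigma>)"
            unfolding bt_def \<sigma>_def by (rule pw_main[OF p2' spos k1 Npos]) simp
        qed
        also have "\<dots> = N powr (2-p) * T + N^2 * Z"
          unfolding T_def Z_def A_def[symmetric]
          by (subst infsum_add) (auto intro!: summable_on_cmult_right btS zs simp: infsum_cmult_right')
        also have "N powr (2-p) * T = N^2"
        proof -
          have "N powr (2-p) * T = N powr ((2-p) + p)" unfolding NpT[symmetric] by (simp only: powr_add)
          also have "\<dots> = N^2" using Npos by simp
          finally show ?thesis .
        qed
        finally show ?thesis using Seq FLN False unfolding K_def by (simp add: algebra_simps)
      qed
    qed
  qed
  then show ?thesis using K0 by blast
qed



lemma vd_div: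
  fixes f g :: "real \<Rightarrow> complex"
  assumes f: "(f has_vector_derivative f') (at x)" and g: "(g has_vector_derivative g') (at x)"
    and g0: "g x \<noteq> 0"
  shows "((\<lambda>y. f y / g y) has_vector_derivative (f' / g x - f x * g' / (g x)^2)) (at x)"
proof -
  have "((inverse \<circ> g) has_vector_derivative (g' * (- (inverse (g x) ^ Suc (Suc 0))))) (at x)"
    by (rule field_vector_diff_chain_at[OF g DERIV_inverse[OF g0]])
  then have gi: "((\<lambda>y. inverse (g y)) has_vector_derivative (g' * (- (inverse (g x) ^ Suc (Suc 0))))) (at x)"
    by (simp add: o_def)
  have "((\<lambda>y. f y * inverse (g y)) has_vector_derivative
      (f x * (g' * (- (inverse (g x) ^ Suc (Suc 0)))) + f' * inverse (g x))) (at x)"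
    by (rule has_vector_derivative_mult[OF f gi])
  moreover have "f x * (g' * (- (inverse (g x) ^ Suc (Suc 0)))) + f' * inverse (g x)
      = f' / g x - f x * g' / (g x)^2"
    using g0 by (simp add: field_simps power2_eq_square)
  ultimately show ?thesis by (simp add: divide_inverse power2_eq_square mult.assoc)
qed

lemma vd_exp_chain:
  fixes g :: "real \<Rightarrow> complex"
  assumes g: "(g has_vector_derivative g') (at x)"
  shows "((\<lambda>y. exp (g y)) has_vector_derivative (g' * exp (g x))) (at x)"
  using field_vector_diff_chain_at[OF g DERIV_exp] by (simp add: o_def)

lemma W_near_b0:
  assumes b: "rapid b"
  shows "cmod (W b z - b 0) \<le> (\<Sum>\<^sub>\<infinity>k. if k = 0 then 0 else cmod (b k))"
proof -
  have h1: "((\<lambda>k. b k * ee k z) has_sum W b z) UNIV"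
    unfolding W_def by (rule has_sum_infsum[OF W_summable[OF b]])
  have h2: "((\<lambda>k::int. - (if k = 0 then b 0 else 0)) has_sum - b 0) UNIV"
    unfolding has_sum_uminus using has_sum_single_int[of 0 "b 0"] by simp
  have "((\<lambda>k. b k * ee k z + - (if k = 0 then b 0 else 0)) has_sum W b z + - b 0) UNIV"
    by (rule has_sum_add[OF h1 h2])
  moreover have "(\<lambda>k. b k * ee k z + - (if k = 0 then b 0 else 0)) = (\<lambda>k. if k = 0 then 0 else b k * ee k z)"
    by (auto simp: ee_def)
  ultimately have "((\<lambda>k. if k = 0 then 0 else b k * ee k z) has_sum W b z - b 0) UNIV" by simp
  then have e: "W b z - b 0 = (\<Sum>\<^sub>\<infinity>k. if k = 0 then 0 else b k * ee k z)" by (simp add: infsumI)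

  have ns: "(\<lambda>k. norm (if k = 0 then 0 else b k * ee k z)) summable_on UNIV"
    by (rule summable_on_comparison_test[OF rapid_summable0[OF b]]) (auto simp: norm_mult)
  have "cmod (\<Sum>\<^sub>\<infinity>k. if k = 0 then 0 else b k * ee k z)
      \<le> (\<Sum>\<^sub>\<infinity>k. norm (if k = 0 then 0 else b k * ee k z))"
    by (rule norm_infsum_bound[OF ns])
  also have "\<dots> = (\<Sum>\<^sub>\<infinity>k. if k = 0 then 0 else cmod (b k))"
    by (rule infsum_cong) (simp add: norm_mult)
  finally show ?thesis using e by simp
qed

lemma W_norm_le:
  assumes a: "rapid a"
  shows "cmod (W a z) \<le> (\<Sum>\<^sub>\<infinity>k. cmod (a k))"
proof -
  have "cmod (W a z) \<le> (\<Sum>\<^sub>\<infinity>k. norm (a k * ee k z))"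
    unfolding W_def by (rule norm_infsum_bound[OF W_abs_summable[OF a]])
  then show ?thesis by (simp add: norm_mult)
qed

lemma W_L2_t:
  assumes a: "rapid a"
  shows "integral {0..2*pi} (\<lambda>x. (cmod (W a (t,x)))^2) = 2 * pi * (\<Sum>\<^sub>\<infinity>k. (cmod (a k))^2)"
proof -
  define c where "c k = a k * exp (- \<i> * of_real ((real_of_int k)^2 * t))" for k
  have rc: "rapid c" unfolding c_def by (rule rapid_shift[OF a])
  have "W a (t,x) = W c (0,x)" for x unfolding c_def by (rule W_shift)
  then have "integral {0..2*pi} (\<lambda>x. (cmod (W a (t,x)))^2) = integral {0..2*pi} (\<lambda>x. (cmod (W c (0,x)))^2)"
    by simp
  moreover have "(\<Sum>\<^sub>\<infinity>k. (cmod (c k))^2) = integral {0..2*pi} (\<lambda>x. (cmod (W c (0,x)))^2) / (2*pi)"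
    using W_parseval[OF rc] by (rule infsumI)
  moreover have "cmod (c k) = cmod (a k)" for k unfolding c_def by (simp add: norm_mult)
  ultimately show ?thesis by simp
qed



lemma dt_eq: "dt b = (\<lambda>k. \<i> * dx (dx b) k)"
  by (rule ext) (simp add: dt_def dx_def power2_eq_square algebra_simps)

lemma pde_from_W:
  assumes b: "rapid b" and nz: "\<And>z. W b z \<noteq> 0"
  shows "smooth_global_solution (\<lambda>t x. 2 * \<i> * W (dx b) (t,x) / W b (t,x))"
proof -
  define b1 where "b1 = dx b"
  define b2 where "b2 = dx b1"
  define b3 where "b3 = dx b2"
  have r1: "rapid b1" and r2: "rapid b2" and r3: "rapid b3"
    unfolding b1_def b2_def b3_def using b by (auto intro!: rapid_dx)
  let ?u = "\<lambda>t x. 2 * \<i> * W (dx b) (t,x) / W b (t,x)"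
  have Wdt0: "W (dt b) z = \<i> * W b2 z" for z unfolding dt_eq b2_def b1_def by (rule W_cmult)
  have Wdt1: "W (dt b1) z = \<i> * W b3 z" for z unfolding dt_eq b3_def b2_def by (rule W_cmult)
  have smooth: "smooth (\<lambda>(t, x). ?u t x)"
  proof -
    have "(\<lambda>(t, x). ?u t x) = (\<lambda>z. (2 * \<i>) * W (dx b) z * inverse (W b z))"
      by (auto simp: divide_inverse)
    moreover have "smooth (\<lambda>z. (2 * \<i>) * W (dx b) z * inverse (W b z))"
      by (intro smooth_mult smooth_cmult smooth_W smooth_inverse rapid_dx b nz)
    ultimately show ?thesis by simp
  qed
  have per: "\<forall>t. periodic2pi (?u t)"
    unfolding periodic2pi_def by (simp add: W_periodic)
  have pde: "vector_derivative (\<lambda>\<tau>. ?u \<tau> x) (at t) =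
        \<i> * vector_derivative (\<lambda>y. vector_derivative (\<lambda>z. ?u t z) (at y)) (at x)
        + ?u t x * vector_derivative (\<lambda>y. ?u t y) (at x)" for t x
  proof -
    define P where "P y = W b1 (t,y) / W b (t,y)" for y
    define Q where "Q y = W b2 (t,y) / W b (t,y)" for y
    define R where "R y = W b3 (t,y) / W b (t,y)" for y
    have nzt: "W b (t,y) \<noteq> 0" for y by (rule nz)
    have dP: "(P has_vector_derivative (Q y - P y * P y)) (at y)" for y
    proof -
      have "((\<lambda>y. W b1 (t,y) / W b (t,y)) has_vector_derivative
          (W b2 (t,y) / W b (t,y) - W b1 (t,y) * W b1 (t,y) / (W b (t,y))^2)) (at y)"
        by (rule vd_div[OF W_dx[OF r1] W_dx[OF b] nzt, unfolded b2_def[symmetric] b1_def[symmetric]])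
      moreover have "W b2 (t,y) / W b (t,y) - W b1 (t,y) * W b1 (t,y) / (W b (t,y))^2 = Q y - P y * P y"
        unfolding P_def Q_def using nzt[of y] by (simp add: field_simps power2_eq_square)
      ultimately show ?thesis unfolding P_def by simp
    qed
    have dQ: "(Q has_vector_derivative (R y - Q y * P y)) (at y)" for y
    proof -
      have "((\<lambda>y. W b2 (t,y) / W b (t,y)) has_vector_derivative
          (W b3 (t,y) / W b (t,y) - W b2 (t,y) * W b1 (t,y) / (W b (t,y))^2)) (at y)"
        by (rule vd_div[OF W_dx[OF r2] W_dx[OF b] nzt, unfolded b3_def[symmetric] b1_def[symmetric]])
      moreover have "W b3 (t,y) / W b (t,y) - W b2 (t,y) * W b1 (t,y) / (W b (t,y))^2 = R y - Q y * P y"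
        unfolding P_def Q_def R_def using nzt[of y] by (simp add: field_simps power2_eq_square)
      ultimately show ?thesis unfolding Q_def by simp
    qed
    have ueq: "?u t = (\<lambda>y. 2 * \<i> * P y)" unfolding P_def b1_def by (simp add: fun_eq_iff)
    have ux: "vector_derivative (\<lambda>z. ?u t z) (at y) = 2 * \<i> * (Q y - P y * P y)" for y
      unfolding ueq by (rule vector_derivative_at) (intro has_vector_derivative_mult_right dP)
    have uxx: "vector_derivative (\<lambda>y. vector_derivative (\<lambda>z. ?u t z) (at y)) (at x)
        = 2 * \<i> * ((R x - Q x * P x) - (P x * (Q x - P x * P x) + (Q x - P x * P x) * P x))"
      unfolding ux
      by (rule vector_derivative_at)
         (intro has_vector_derivative_mult_right has_vector_derivative_diff dQ has_vector_derivative_mult dP)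
    have ut: "vector_derivative (\<lambda>\<tau>. ?u \<tau> x) (at t) = 2 * \<i> * (\<i> * (R x - P x * Q x))"
    proof -
      have "((\<lambda>\<tau>. W b1 (\<tau>,x) / W b (\<tau>,x)) has_vector_derivative
          (W (dt b1) (t,x) / W b (t,x) - W b1 (t,x) * W (dt b) (t,x) / (W b (t,x))^2)) (at t)"
        by (rule vd_div[OF W_dt[OF r1] W_dt[OF b] nz])
      moreover have "W (dt b1) (t,x) / W b (t,x) - W b1 (t,x) * W (dt b) (t,x) / (W b (t,x))^2
          = \<i> * (R x - P x * Q x)"
        unfolding Wdt0 Wdt1 P_def Q_def R_def using nzt[of x] by (simp add: field_simps power2_eq_square)
      ultimately have "((\<lambda>\<tau>. ?u \<tau> x) has_vector_derivative 2 * \<i> * (\<i> * (R x - P x * Q x))) (at t)"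
        unfolding b1_def using has_vector_derivative_mult_right[where a="2 * \<i>"]
        by (simp add: times_divide_eq_right[symmetric] del: times_divide_eq_right)
      then show ?thesis by (rule vector_derivative_at)
    qed
    have u1: "?u t x = 2 * \<i> * P x" using ueq by (simp add: fun_eq_iff)
    show ?thesis unfolding ut unfolding uxx unfolding u1 unfolding ux by (simp add: algebra_simps)
  qed
  show ?thesis unfolding smooth_global_solution_def using smooth per pde by blast
qed



definition iota :: "int \<Rightarrow> real" where
  "iota k = (if k = 0 then 0 else 1 / \<bar>real_of_int k\<bar>)"

lemma iota_nonneg: "iota k \<ge> 0" by (simp add: iota_def)

lemma iota_sq_summable: "(\<lambda>k. (iota k)^2) summable_on UNIV"
proof -
  have "(\<lambda>k. 4 * w2 k) summable_on UNIV" by (intro summable_on_cmult_right w2_summable)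
  then show ?thesis
  proof (rule summable_on_comparison_test)
    fix k :: int
    show "(iota k)^2 \<le> 4 * w2 k"
    proof (cases "k = 0")
      case True then show ?thesis by (simp add: iota_def w2_def)
    next
      case False
      then have k1: "\<bar>real_of_int k\<bar> \<ge> 1" by linarith
      have "(1 + \<bar>real_of_int k\<bar>)^2 \<le> (2 * \<bar>real_of_int k\<bar>)^2" using k1 by (intro power_mono) auto
      then have "(1 + \<bar>real_of_int k\<bar>)^2 \<le> 4 * (real_of_int k)^2" by (simp add: power_mult_distrib)
      then show ?thesis using False k1
        by (simp add: iota_def w2_def field_simps power2_eq_square)
    qed
  qed simp
qed

lemma Wt_cont: "rapid a \<Longrightarrow> continuous_on A (\<lambda>x. W a (t, x))"
  by (rule continuous_on_compose2[of UNIV "W a"]) (auto intro!: continuous_intros intro: smooth_continuous smooth_W)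

lemma main_constr:
  fixes \<phi> :: "real \<Rightarrow> complex"
  assumes K0: "K \<ge> 0"
    and KK: "\<And>a. rapid a \<Longrightarrow> a 0 = 0 \<Longrightarrow> (\<Sum>\<^sub>\<infinity>k. (cmod (a k))^2) \<le> K * (FLc s p a)^2"
    and s\<phi>: "smooth \<phi>" and p\<phi>: "periodic2pi \<phi>" and m\<phi>: "mean_zero \<phi>"
    and small: "sqrt (\<Sum>\<^sub>\<infinity>k. (iota k)^2) * sqrt K * FL_norm s p \<phi> \<le> 1/8"
  shows "\<exists>u. smooth_global_solution u \<and> u 0 = \<phi> \<and>
     (\<forall>t. L2_norm (u t) \<le> sqrt (8 * pi * exp (SUP x. cmod (Jprim \<phi> x)) * K * (FL_norm s p \<phi>)^2))"
proof -
  define Z2 where "Z2 = (\<Sum>\<^sub>\<infinity>k. (iota k)^2)"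
  have Z20: "Z2 \<ge> 0" unfolding Z2_def by (intro infsum_nonneg) auto
  define a where "a = fcoeff \<phi>"
  have ra: "rapid a" unfolding a_def by (rule smooth_periodic_rapid[OF s\<phi> p\<phi>])
  have a0: "a 0 = 0" using m\<phi> unfolding mean_zero_def a_def .
  have \<phi>c: "continuous_on UNIV \<phi>" by (rule smooth_continuous[OF s\<phi>])
  have \<phi>eq: "\<phi> x = W a (0,x)" for x
    unfolding a_def by (rule fourier_inversion[OF \<phi>c p\<phi> ra[unfolded a_def]])
  define N where "N = FL_norm s p \<phi>"
  define A2 where "A2 = (\<Sum>\<^sub>\<infinity>k. (cmod (a k))^2)"
  have A2K: "A2 \<le> K * N^2" unfolding A2_def N_def FL_norm_FLc a_def[symmetric] using KK[OF ra a0] .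
  have A20: "A2 \<ge> 0" unfolding A2_def by (intro infsum_nonneg) auto
  have N0: "N \<ge> 0" unfolding N_def FL_norm_def by simp
  have int\<phi>: "integral {0..2*pi} (\<lambda>x. (cmod (\<phi> x))^2) = 2 * pi * A2"
    using W_L2_t[OF ra, of 0] unfolding A2_def by (simp add: \<phi>eq)
  define j where "j k = (if k = 0 then 0 else a k / (\<i> * of_int k))" for k
  have rj: "rapid j"
  proof (rule rapid_mono[OF ra, where j=0 and C=1])
    fix k
    show "cmod (j k) \<le> (1 + \<bar>real_of_int k\<bar>) ^ 0 * 1 * cmod (a k)"
    proof (cases "k = 0")
      case False
      then have k1: "\<bar>real_of_int k\<bar> \<ge> 1" by linarith
      have "cmod (j k) = cmod (a k) / \<bar>real_of_int k\<bar>" using False by (simp add: j_def norm_divide norm_mult)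
      also have "\<dots> \<le> cmod (a k)" using k1 by (simp add: divide_le_eq mult_le_cancel_left1 order_trans[OF _ mult_right_mono[OF k1]])
      finally show ?thesis by simp
    qed (simp add: j_def)
  qed
  have dxj: "dx j = a" by (rule ext) (auto simp: dx_def j_def a0)
  define J where "J x = W j (0,x)" for x
  have Jprim_eq: "Jprim \<phi> x = J x" for x
    unfolding Jprim_def J_def W_def
    by (rule infsum_cong_neutral) (auto simp: j_def a_def ee0)
  have Jder: "(J has_vector_derivative \<phi> x) (at x)" for x
    using W_dx[OF rj, of 0 x] unfolding dxj J_def \<phi>eq[symmetric] .
  have iS: "(\<lambda>k. (iota k)^2) summable_on UNIV" by (rule iota_sq_summable)
  have Jbound: "cmod (J x) \<le> sqrt A2 * sqrt Z2" for x
  proof -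
    have "cmod (J x) \<le> (\<Sum>\<^sub>\<infinity>k. cmod (j k))" unfolding J_def by (rule W_norm_le[OF rj])
    also have "\<dots> = (\<Sum>\<^sub>\<infinity>k. cmod (a k) * iota k)"
      by (rule infsum_cong) (simp add: j_def iota_def norm_divide norm_mult)
    also have "\<dots> \<le> sqrt A2 * sqrt Z2" unfolding A2_def Z2_def
      by (rule cs_infsum(2)[OF _ iota_nonneg sq_summable[OF ra] iS]) simp
    finally show ?thesis .
  qed
  define M where "M = (SUP x. cmod (Jprim \<phi> x))"
  have bdd: "bdd_above (range (\<lambda>x. cmod (Jprim \<phi> x)))"
    using Jbound Jprim_eq by (intro bdd_aboveI2[where M="sqrt A2 * sqrt Z2"]) auto
  have JM: "cmod (J x) \<le> M" for x
    unfolding M_def Jprim_eq[symmetric] by (rule cSUP_upper[OF _ bdd]) simp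
  have M_le: "M \<le> sqrt A2 * sqrt Z2"
    unfolding M_def by (rule cSUP_least) (auto simp: Jprim_eq Jbound)
  have M0: "M \<ge> 0" using JM[of 0] norm_ge_zero order_trans by blast
  define cN where "cN = sqrt Z2 * sqrt K * N"
  have cN0: "cN \<ge> 0" unfolding cN_def using N0 Z20 K0 by simp
  have cN8: "cN \<le> 1/8" using small unfolding cN_def Z2_def N_def .
  have sA2: "sqrt A2 \<le> sqrt K * N"
  proof -
    have "sqrt A2 \<le> sqrt (K * N^2)" using A2K by simp
    also have "\<dots> = sqrt K * N" using N0 by (simp add: real_sqrt_mult)
    finally show ?thesis .
  qed
  have McN: "M \<le> cN"
  proof -
    have "sqrt A2 * sqrt Z2 \<le> sqrt K * N * sqrt Z2" using sA2 Z20 by (intro mult_right_mono) auto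
    then show ?thesis using M_le unfolding cN_def by (simp add: mult_ac)
  qed
  define w0 where "w0 x = exp (- (\<i>/2) * J x)" for x
  have bl: "bounded_linear (\<lambda>x::real. (0::real, x))"
    by (intro bounded_linear_Pair bounded_linear_zero bounded_linear_ident)
  have w0sm: "smooth w0"
  proof -
    have "smooth (\<lambda>x. W j (0, x))" by (rule smooth_compose_linear[OF smooth_W[OF rj] bl])
    then have "smooth (\<lambda>x. exp (- (\<i>/2) * W j (0, x)))" by (intro smooth_exp smooth_cmult)
    then show ?thesis unfolding w0_def J_def .
  qed
  have w0p: "periodic2pi w0" unfolding periodic2pi_def w0_def J_def by (simp add: W_periodic)
  have w0norm: "cmod (w0 x) = exp (Im (J x) / 2)" for x unfolding w0_def by simp
  have ImJ: "\<bar>Im (J x)\<bar> \<le> M" for x using abs_Im_le_cmod[of "J x"] JM[of x] by linarith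
  have w0_lo: "exp (- M / 2) \<le> cmod (w0 x)" for x
    unfolding w0norm using ImJ[of x] by simp
  have w0_hi: "cmod (w0 x) \<le> exp (M / 2)" for x
    unfolding w0norm using ImJ[of x] by simp
  have w0nz: "w0 x \<noteq> 0" for x unfolding w0_def by simp
  have w0der: "(w0 has_vector_derivative (- (\<i>/2) * \<phi> x * w0 x)) (at x)" for x
  proof -
    have "((\<lambda>y. - (\<i>/2) * J y) has_vector_derivative (- (\<i>/2) * \<phi> x)) (at x)"
      by (rule has_vector_derivative_mult_right[OF Jder])
    from vd_exp_chain[OF this] show ?thesis unfolding w0_def by simp
  qed
  define b where "b = fcoeff w0"
  have rb: "rapid b" unfolding b_def by (rule smooth_periodic_rapid[OF w0sm w0p])
  have w0eq: "w0 x = W b (0,x)" for x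
    unfolding b_def by (rule fourier_inversion[OF smooth_continuous[OF w0sm] w0p rb[unfolded b_def]])
  have w1eq: "W (dx b) (0,x) = - (\<i>/2) * \<phi> x * w0 x" for x
  proof -
    have "(w0 has_vector_derivative W (dx b) (0,x)) (at x)"
      using W_dx[OF rb, of 0 x] unfolding w0eq[symmetric] by (simp add: w0eq[abs_def])
    then show ?thesis using w0der[of x] vector_derivative_unique_at by blast
  qed
  define Bd where "Bd = (\<Sum>\<^sub>\<infinity>k. (cmod (dx b k))^2)"
  have Bd0: "Bd \<ge> 0" unfolding Bd_def by (intro infsum_nonneg) auto
  have Bd_le: "Bd \<le> exp M * A2 / 4"
  proof -
    have "2 * pi * Bd = integral {0..2*pi} (\<lambda>x. (cmod (W (dx b) (0,x)))^2)"
      using W_L2_t[OF rapid_dx[OF rb], of 0] unfolding Bd_def by simp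
    also have "\<dots> \<le> integral {0..2*pi} (\<lambda>x. (cmod (\<phi> x))^2 * (exp M / 4))"
    proof (rule integral_le)
      show "(\<lambda>x. (cmod (W (dx b) (0,x)))^2) integrable_on {0..2*pi}"
        by (intro integrable_continuous_interval continuous_intros W0_cont rapid_dx rb)
      show "(\<lambda>x. (cmod (\<phi> x))^2 * (exp M / 4)) integrable_on {0..2*pi}"
        by (intro integrable_continuous_interval continuous_intros continuous_on_subset[OF \<phi>c]) auto
      fix x
      have "(cmod (w0 x))^2 \<le> (exp (M/2))^2" using w0_hi[of x] by (intro power_mono) auto
      also have "(exp (M/2))^2 = exp M" by (simp add: power2_eq_square exp_add[symmetric])
      finally have w2: "(cmod (w0 x))^2 \<le> exp M" .
      have "(cmod (W (dx b) (0,x)))^2 = (cmod (\<phi> x))^2 * (cmod (w0 x))^2 / 4"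
        unfolding w1eq by (simp add: norm_mult power_mult_distrib power_divide)
      also have "\<dots> \<le> (cmod (\<phi> x))^2 * exp M / 4"
        by (intro divide_right_mono mult_left_mono w2) auto
      finally show "(cmod (W (dx b) (0,x)))^2 \<le> (cmod (\<phi> x))^2 * (exp M / 4)" by simp
    qed
    also have "\<dots> = exp M / 4 * (2 * pi * A2)" using int\<phi> by (simp add: mult.commute)
    finally show ?thesis by (simp add: field_simps)
  qed
  define R where "R = (\<Sum>\<^sub>\<infinity>k. if k = 0 then 0 else cmod (b k))"
  have R0: "R \<ge> 0" unfolding R_def by (intro infsum_nonneg) auto
  have R_le: "R \<le> sqrt Bd * sqrt Z2"
  proof -
    have "R = (\<Sum>\<^sub>\<infinity>k. cmod (dx b k) * iota k)"
      unfolding R_def by (rule infsum_cong) (simp add: dx_def iota_def norm_mult)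
    also have "\<dots> \<le> sqrt Bd * sqrt Z2" unfolding Bd_def Z2_def
      by (rule cs_infsum(2)[OF _ iota_nonneg sq_summable[OF rapid_dx[OF rb]] iS]) simp
    finally show ?thesis .
  qed
  have R8: "R \<le> 1/8"
  proof -
    have "R^2 \<le> (sqrt Bd * sqrt Z2)^2" using R_le R0 by (intro power_mono) auto
    also have "\<dots> = Bd * Z2" using Bd0 Z20 by (simp add: power_mult_distrib)
    also have "\<dots> \<le> exp M * A2 / 4 * Z2" using Bd_le Z20 by (intro mult_right_mono) auto
    also have "\<dots> \<le> exp M * (K * N^2) / 4 * Z2"
      using A2K Z20 by (intro mult_right_mono divide_right_mono mult_left_mono) auto
    also have "\<dots> = exp M * cN^2 / 4" unfolding cN_def using Z20 K0
      by (simp add: power_mult_distrib)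
    also have "\<dots> \<le> 3 * (1/8)^2 / 4"
    proof -
      have "M \<le> 1" using McN cN8 by simp
      then have "exp M \<le> exp 1" by simp
      then have "exp M \<le> 3" using exp_le by linarith
      moreover have "cN^2 \<le> (1/8)^2" using cN0 cN8 by (intro power_mono) auto
      ultimately show ?thesis by (intro divide_right_mono mult_mono) auto
    qed
    also have "(3 * (1/8)^2 / 4 :: real) \<le> (1/8)^2" by simp
    finally have "R^2 \<le> (1/8)^2" .
    then show ?thesis using R0 by (simp add: power2_le_iff_abs_le)
  qed
  have wlow: "cmod (W b z) \<ge> 1/2" for z
  proof -
    have e1: "exp (- M / 2) \<ge> 1 - M / 2" using exp_ge_add_one_self[of "- M / 2"] by simp
    have "cmod (W b (0,0)) \<ge> exp (- M / 2)" using w0_lo[of 0] w0eq[of 0] by simp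
    moreover have "cmod (W b (0,0) - b 0) \<le> R" unfolding R_def by (rule W_near_b0[OF rb])
    ultimately have b0: "cmod (b 0) \<ge> exp (- M / 2) - R"
      using norm_triangle_ineq2[of "W b (0,0)" "b 0"] by linarith
    have "cmod (W b z - b 0) \<le> R" unfolding R_def by (rule W_near_b0[OF rb])
    then have "cmod (W b z) \<ge> cmod (b 0) - R" using norm_triangle_ineq2[of "b 0" "W b z"]
      by (simp add: norm_minus_commute)
    then show ?thesis using b0 e1 R8 McN cN8 by linarith
  qed
  have nz: "W b z \<noteq> 0" for z using wlow[of z] by auto
  define u where "u = (\<lambda>t x. 2 * \<i> * W (dx b) (t,x) / W b (t,x))"
  have sol: "smooth_global_solution u" unfolding u_def by (rule pde_from_W[OF rb nz])
  have init: "u 0 = \<phi>"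
  proof
    fix x
    show "u 0 x = \<phi> x"
      unfolding u_def w1eq w0eq[symmetric] using w0nz[of x] by (simp add: field_simps)
  qed
  have L2: "L2_norm (u t) \<le> sqrt (8 * pi * exp M * K * N^2)" for t
  proof -
    have "integral {0..2*pi} (\<lambda>x. (cmod (u t x))^2) \<le> integral {0..2*pi} (\<lambda>x. 16 * (cmod (W (dx b) (t,x)))^2)"
    proof (rule integral_le)
      show "(\<lambda>x. (cmod (u t x))^2) integrable_on {0..2*pi}"
        unfolding u_def by (intro integrable_continuous_interval continuous_intros Wt_cont rapid_dx rb) (simp add: nz)
      show "(\<lambda>x. 16 * (cmod (W (dx b) (t,x)))^2) integrable_on {0..2*pi}"
        by (intro integrable_continuous_interval continuous_intros Wt_cont rapid_dx rb)
      fix x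
      have "cmod (u t x) = 2 * cmod (W (dx b) (t,x)) / cmod (W b (t,x))"
        unfolding u_def by (simp add: norm_mult norm_divide)
      also have "\<dots> \<le> 4 * cmod (W (dx b) (t,x))"
        using wlow[of "(t,x)"] by (simp add: divide_le_eq mult_left_mono[of "1/2" _ "4 * cmod (W (dx b) (t,x))", simplified])
      finally have "(cmod (u t x))^2 \<le> (4 * cmod (W (dx b) (t,x)))^2" by (intro power_mono) auto
      then show "(cmod (u t x))^2 \<le> 16 * (cmod (W (dx b) (t,x)))^2" by (simp add: power_mult_distrib)
    qed
    also have "\<dots> = 16 * (2 * pi * Bd)" using W_L2_t[OF rapid_dx[OF rb], of t] unfolding Bd_def by simp
    also have "\<dots> \<le> 16 * (2 * pi * (exp M * (K * N^2) / 4))"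
      using Bd_le A2K by (intro mult_left_mono order_trans[OF Bd_le] divide_right_mono) auto
    also have "\<dots> = 8 * pi * exp M * K * N^2" by simp
    finally show ?thesis unfolding L2_norm_def by simp
  qed
  show ?thesis
    by (rule exI[of _ u]) (use sol init L2 in \<open>simp add: M_def N_def\<close>)
qed


theorem corollary3p8:
  fixes s p :: real
  assumes "(s > 1/2 - 1/p \<and> p > 2) \<or> (s \<ge> 0 \<and> p = 2)"
  shows "\<exists>\<delta>2 > 0. \<exists>C :: real \<Rightarrow> real \<Rightarrow> real.
    \<forall>\<phi> :: real \<Rightarrow> complex.
      smooth \<phi> \<and> periodic2pi \<phi> \<and> mean_zero \<phi> \<and> FL_norm s p \<phi> \<le> \<delta>2 \<longrightarrow>
      (\<exists>u. smooth_global_solution u \<and> u 0 = \<phi> \<and>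
        (\<forall>t. L2_norm (u t) \<le> C (SUP x. cmod (Jprim \<phi> x)) (FL_norm s p \<phi>)))"
proof -
  obtain K where K0: "K \<ge> 0"
    and KK: "\<forall>a. rapid a \<longrightarrow> a 0 = 0 \<longrightarrow> (\<Sum>\<^sub>\<infinity>k. (cmod (a k))^2) \<le> K * (FLc s p a)^2"
    using FL_control[OF assms] by blast
  define c where "c = sqrt (\<Sum>\<^sub>\<infinity>k. (iota k)^2) * sqrt K"
  have c0: "c \<ge> 0" unfolding c_def using K0 by (simp add: infsum_nonneg)
  define \<delta> where "\<delta> = 1 / (8 * (c + 1))"
  have \<delta>0: "\<delta> > 0" unfolding \<delta>_def using c0 by simp
  have c\<delta>: "c * \<delta> \<le> 1/8" unfolding \<delta>_def using c0 by (simp add: field_simps)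
  show ?thesis
  proof (intro exI[of _ \<delta>] conjI \<delta>0 exI[of _ "\<lambda>m n. sqrt (8 * pi * exp m * K * n^2)"] allI impI)
    fix \<phi> :: "real \<Rightarrow> complex"
    assume H: "smooth \<phi> \<and> periodic2pi \<phi> \<and> mean_zero \<phi> \<and> FL_norm s p \<phi> \<le> \<delta>"
    have "c * FL_norm s p \<phi> \<le> c * \<delta>" using H c0 by (intro mult_left_mono) auto
    then have sm: "sqrt (\<Sum>\<^sub>\<infinity>k. (iota k)^2) * sqrt K * FL_norm s p \<phi> \<le> 1/8"
      using c\<delta> unfolding c_def by linarith
    show "\<exists>u. smooth_global_solution u \<and> u 0 = \<phi> \<and>
        (\<forall>t. L2_norm (u t) \<le> sqrt (8 * pi * exp (SUP x. cmod (Jprim \<phi> x)) * K * (FL_norm s p \<phi>)^2))"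
      using main_constr[OF K0 _ _ _ _ sm] KK H by blast
  qed
qed


end
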